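(* Let $\mathcal{F}=\{(X,\rho_1);f_1,\dots,f_N\}$ and $\mathcal{G}=\{(Y,\rho_2);g_1,\dots,g_N\}$ be IFSs on complete metric spaces with $\rho_1(f_i(x),f_i(x'))=c_i\rho_1(x,x')$ and $\rho_2(g_i(y),g_i(y'))\le r_i\rho_2(y,y')$ for all $x,x'\in X$, $y,y'\in Y$, where $c_i,r_i\in(0,1)$. If $r_i\le c_i$ for all $i$ and $\mathcal{F}$ satisfies the strong open set condition, then $\dim_H G(T_{\mathcal{FG}})=s_0$, where $\sum_{i=1}^Nc_i^{s_0}=1$.
   Context: $X\times Y$ carries the metric $\mathcal{D}((x,y),(x',y'))=\max\{\rho_1(x,x'),\rho_2(y,y')\}$. Attractor $A_\mathcal{F}$: unique nonempty compact $A$ with $A=\bigcup f_i(A)$. Code space $\Omega=\{1,\dots,N\}^{\mathbb{N}}$ ordered lexicographically; address map $\phi_\mathcal{F}(\sigma)=\lim_kf_{\sigma_1}\circ\cdots\circ f_{\sigma_k}(x)$; tops function $\tau_\mathcal{F}(x)=\max\{\sigma:\phi_\mathcal{F}(\sigma)=x\}$; fractal transformation $T_{\mathcal{FG}}=\phi_\mathcal{G}\circ\tau_\mathcal{F}:A_\mathcal{F}\to A_\mathcal{G}$; $G(T_{\mathcal{FG}})=\{(x,T_{\mathcal{FG}}(x)):x\in A_\mathcal{F}\}$. SOSC: a nonempty open $U$ with $f_i(U)\subset U$, $f_i(U)\cap f_j(U)=\emptyset$ for $i\ne j$, $U\cap A_\mathcal{F}\ne\emptyset$. *)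

theory Defs
  imports "HOL-Analysis.Analysis"
begin

definition attractor :: "nat \<Rightarrow> (nat \<Rightarrow> 'a::metric_space \<Rightarrow> 'a) \<Rightarrow> 'a set" where
  "attractor N f = (THE A. compact A \<and> A \<noteq> {} \<and> A = (\<Union>i\<in>{1..N}. f i ` A))"

definition code_space :: "nat \<Rightarrow> (nat \<Rightarrow> nat) set" where
  "code_space N = {\<sigma>. \<forall>k. \<sigma> k \<in> {1..N}}"

text \<open>f_{sigma_1} o ... o f_{sigma_k} (positions counted from 0).\<close>
fun fcomp :: "(nat \<Rightarrow> 'a \<Rightarrow> 'a) \<Rightarrow> (nat \<Rightarrow> nat) \<Rightarrow> nat \<Rightarrow> 'a \<Rightarrow> 'a" where
  "fcomp f \<sigma> 0 = id"
| "fcomp f \<sigma> (Suc k) = fcomp f \<sigma> k \<circ> f (\<sigma> k)"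

text \<open>Address map; the limit is independent of the starting point, we take an
  arbitrary fixed point.\<close>
definition address :: "(nat \<Rightarrow> 'a::metric_space \<Rightarrow> 'a) \<Rightarrow> (nat \<Rightarrow> nat) \<Rightarrow> 'a" where
  "address f \<sigma> = lim (\<lambda>k. fcomp f \<sigma> k undefined)"

definition lex_less :: "(nat \<Rightarrow> nat) \<Rightarrow> (nat \<Rightarrow> nat) \<Rightarrow> bool" where
  "lex_less \<sigma> \<omega> \<longleftrightarrow> (\<exists>k. (\<forall>j<k. \<sigma> j = \<omega> j) \<and> \<sigma> k < \<omega> k)"

definition lex_le :: "(nat \<Rightarrow> nat) \<Rightarrow> (nat \<Rightarrow> nat) \<Rightarrow> bool" where
  "lex_le \<sigma> \<omega> \<longleftrightarrow> \<sigma> = \<omega> \<or> lex_less \<sigma> \<omega>"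

definition tops :: "nat \<Rightarrow> (nat \<Rightarrow> 'a::metric_space \<Rightarrow> 'a) \<Rightarrow> 'a \<Rightarrow> (nat \<Rightarrow> nat)" where
  "tops N f x = (THE \<sigma>. \<sigma> \<in> code_space N \<and> address f \<sigma> = x \<and>
      (\<forall>\<omega>\<in>code_space N. address f \<omega> = x \<longrightarrow> lex_le \<omega> \<sigma>))"

definition fractal_transformation ::
  "nat \<Rightarrow> (nat \<Rightarrow> 'a::metric_space \<Rightarrow> 'a) \<Rightarrow> (nat \<Rightarrow> 'b::metric_space \<Rightarrow> 'b) \<Rightarrow> 'a \<Rightarrow> 'b" where
  "fractal_transformation N f g x = address g (tops N f x)"

definition graph_FT ::
  "nat \<Rightarrow> (nat \<Rightarrow> 'a::metric_space \<Rightarrow> 'a) \<Rightarrow> (nat \<Rightarrow> 'b::metric_space \<Rightarrow> 'b) \<Rightarrow> ('a \<times> 'b) set" where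
  "graph_FT N f g = {(x, fractal_transformation N f g x) | x. x \<in> attractor N f}"

definition SOSC :: "nat \<Rightarrow> (nat \<Rightarrow> 'a::metric_space \<Rightarrow> 'a) \<Rightarrow> bool" where
  "SOSC N f \<longleftrightarrow> (\<exists>U. open U \<and> U \<noteq> {} \<and> (\<forall>i\<in>{1..N}. f i ` U \<subseteq> U) \<and>
      (\<forall>i\<in>{1..N}. \<forall>j\<in>{1..N}. i \<noteq> j \<longrightarrow> f i ` U \<inter> f j ` U = {}) \<and>
      U \<inter> attractor N f \<noteq> {})"

definition diam_wrt :: "('a \<Rightarrow> 'a \<Rightarrow> real) \<Rightarrow> 'a set \<Rightarrow> ennreal" where
  "diam_wrt d U = (SUP x\<in>U. SUP y\<in>U. ennreal (d x y))"

definition diam_pow :: "('a \<Rightarrow> 'a \<Rightarrow> real) \<Rightarrow> real \<Rightarrow> 'a set \<Rightarrow> ennreal" where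
  "diam_pow d s U = (if U = {} then 0 else if s = 0 then 1
      else if diam_wrt d U = \<infinity> then \<infinity> else ennreal (enn2real (diam_wrt d U) powr s))"

definition hausdorff_delta :: "('a \<Rightarrow> 'a \<Rightarrow> real) \<Rightarrow> real \<Rightarrow> real \<Rightarrow> 'a set \<Rightarrow> ennreal" where
  "hausdorff_delta d s \<delta> E = (INF C\<in>{C :: nat \<Rightarrow> 'a set. E \<subseteq> (\<Union>i. C i) \<and>
      (\<forall>i. diam_wrt d (C i) \<le> ennreal \<delta>)}. (\<Sum>i. diam_pow d s (C i)))"

definition hausdorff_outer :: "('a \<Rightarrow> 'a \<Rightarrow> real) \<Rightarrow> real \<Rightarrow> 'a set \<Rightarrow> ennreal" where
  "hausdorff_outer d s E = (SUP \<delta>\<in>{0<..}. hausdorff_delta d s \<delta> E)"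

definition hausdorff_dim :: "('a \<Rightarrow> 'a \<Rightarrow> real) \<Rightarrow> 'a set \<Rightarrow> ereal" where
  "hausdorff_dim d E = Inf {ereal s | s. s \<ge> 0 \<and> hausdorff_outer d s E = 0}"

definition max_dist :: "('a::metric_space \<times> 'b::metric_space) \<Rightarrow> ('a \<times> 'b) \<Rightarrow> real" where
  "max_dist p q = max (dist (fst p) (fst q)) (dist (snd p) (snd q))"

end

theory Submission
  imports Defs
begin



fun comp :: "(nat \<Rightarrow> 'a \<Rightarrow> 'a) \<Rightarrow> nat list \<Rightarrow> 'a \<Rightarrow> 'a" where
  "comp \<phi> [] = id"
| "comp \<phi> (v#u) = \<phi> v \<circ> comp \<phi> u"

lemma comp_append: "comp \<phi> (u @ w) = comp \<phi> u \<circ> comp \<phi> w"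
  by (induct u) auto

lemma fcomp_eq: "fcomp \<phi> \<sigma> k = comp \<phi> (map \<sigma> [0..<k])"
  by (induct k) (auto simp: comp_append)

lemma map_upt_add: "map \<sigma> [0..<k+m] = map \<sigma> [0..<k] @ map (\<lambda>j. \<sigma> (j+k)) [0..<m]"
proof (induct m)
  case (Suc m) then show ?case by (simp add: add.commute)
qed simp

lemma code_space_set: "\<sigma> \<in> code_space N \<Longrightarrow> set (map \<sigma> [0..<k]) \<subseteq> {1..N}"
  by (auto simp: code_space_def)

lemma code_space_shift: "\<sigma> \<in> code_space N \<Longrightarrow> (\<lambda>j. \<sigma> (j+k)) \<in> code_space N"
  by (auto simp: code_space_def)

lemma comp_dist_prod:
  assumes "\<And>i x y. i \<in> set u \<Longrightarrow> dist (\<phi> i x) (\<phi> i y) \<le> \<rho> i * dist x y"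
    and "\<And>i. i \<in> set u \<Longrightarrow> 0 \<le> \<rho> i"
  shows "dist (comp \<phi> u x) (comp \<phi> u y) \<le> prod_list (map \<rho> u) * dist x y"
  using assms
proof (induct u)
  case (Cons v u)
  have "dist (comp \<phi> (v#u) x) (comp \<phi> (v#u) y) \<le> \<rho> v * dist (comp \<phi> u x) (comp \<phi> u y)"
    using Cons.prems by simp
  also have "\<dots> \<le> \<rho> v * (prod_list (map \<rho> u) * dist x y)"
    using Cons by (intro mult_left_mono) auto
  finally show ?case by (simp add: mult.assoc)
qed simp

lemma comp_dist_eq:
  assumes "\<And>i x y. i \<in> set u \<Longrightarrow> dist (\<phi> i x) (\<phi> i y) = \<rho> i * dist x y"
  shows "dist (comp \<phi> u x) (comp \<phi> u y) = prod_list (map \<rho> u) * dist x y"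
  using assms by (induct u arbitrary: x y) auto

lemma tendsto_by_dist_bound:
  fixes a b :: "nat \<Rightarrow> 'a::metric_space"
  assumes "\<And>k. dist (a k) (b k) \<le> e k" "e \<longlonglongrightarrow> 0" "b \<longlonglongrightarrow> l"
  shows "a \<longlonglongrightarrow> l"
proof -
  have "(\<lambda>k. dist (b k) l) \<longlonglongrightarrow> 0" using assms(3) tendsto_dist_iff by blast
  from tendsto_add[OF assms(2) this] have lim: "(\<lambda>k. e k + dist (b k) l) \<longlonglongrightarrow> 0" by simp
  have le: "dist (a k) l \<le> e k + dist (b k) l" for k
    using assms(1)[of k] dist_triangle[of "a k" l "b k"] by linarith
  have "(\<lambda>k. dist (a k) l) \<longlonglongrightarrow> 0"
    by (rule tendsto_sandwich[of "\<lambda>_. 0" _ _ "\<lambda>k. e k + dist (b k) l", OF _ _ tendsto_const lim])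
      (simp_all add: le)
  then show ?thesis using tendsto_dist_iff by blast
qed

lemma lip_continuous_on:
  fixes h :: "'a::metric_space \<Rightarrow> 'b::metric_space"
  assumes "\<And>x y. dist (h x) (h y) \<le> C * dist x y" "0 \<le> C"
  shows "continuous_on S h"
  unfolding continuous_on_iff
proof (intro ballI allI impI)
  fix x e assume "x \<in> S" "(0::real) < e"
  show "\<exists>d>0. \<forall>x'\<in>S. dist x' x < d \<longrightarrow> dist (h x') (h x) < e"
  proof (intro exI[of _ "e/(C+1)"] conjI ballI impI)
    show "0 < e/(C+1)" using \<open>0<e\<close> assms(2) by simp
    fix x' assume "dist x' x < e/(C+1)"
    then have "dist x' x * (C+1) < e" using assms(2) by (simp add: field_simps)
    moreover have "dist (h x') (h x) \<le> C * dist x' x" by fact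
    moreover have "C * dist x' x \<le> dist x' x * (C+1)" by (simp add: algebra_simps)
    ultimately show "dist (h x') (h x) < e" by linarith
  qed
qed

locale ifsL =
  fixes N :: nat and \<phi> :: "nat \<Rightarrow> 'a::complete_space \<Rightarrow> 'a" and L :: real
  assumes N1: "N \<ge> 1" and L0: "0 \<le> L" and L1: "L < 1"
    and lip: "\<And>i x y. i \<in> {1..N} \<Longrightarrow> dist (\<phi> i x) (\<phi> i y) \<le> L * dist x y"
begin

lemma comp_lip: "set u \<subseteq> {1..N} \<Longrightarrow> dist (comp \<phi> u x) (comp \<phi> u y) \<le> L ^ length u * dist x y"
proof (induct u)
  case (Cons v u)
  have "dist (comp \<phi> (v#u) x) (comp \<phi> (v#u) y) \<le> L * dist (comp \<phi> u x) (comp \<phi> u y)"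
    using Cons.prems lip by simp
  also have "\<dots> \<le> L * (L ^ length u * dist x y)"
    using Cons L0 by (intro mult_left_mono) auto
  finally show ?case by (simp add: mult.assoc)
qed simp

definition Mx :: "'a \<Rightarrow> real" where "Mx x0 = Max ((\<lambda>i. dist (\<phi> i x0) x0) ` {1..N})"
definition Rad :: "'a \<Rightarrow> real" where "Rad x0 = Mx x0 / (1 - L)"

lemma Mx: "i \<in> {1..N} \<Longrightarrow> dist (\<phi> i x0) x0 \<le> Mx x0"
  unfolding Mx_def by (intro Max_ge) auto

lemma Mx0: "0 \<le> Mx x0"
proof -
  have "1 \<in> {1..N}" using N1 by simp
  from Mx[OF this, of x0] show ?thesis using zero_le_dist[of "\<phi> 1 x0" x0] by linarith
qed

lemma Rad0: "0 \<le> Rad x0"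
  using Mx0 L1 by (simp add: Rad_def)

lemma cball_inv: "i \<in> {1..N} \<Longrightarrow> \<phi> i ` cball x0 (Rad x0) \<subseteq> cball x0 (Rad x0)"
proof safe
  fix y assume i: "i \<in> {1..N}" and y: "y \<in> cball x0 (Rad x0)"
  have "dist x0 (\<phi> i y) \<le> dist (\<phi> i x0) x0 + dist (\<phi> i y) (\<phi> i x0)"
    by (metis dist_commute dist_triangle)
  also have "\<dots> \<le> Mx x0 + L * dist y x0" using Mx[OF i] lip[OF i] by (intro add_mono) auto
  also have "\<dots> \<le> Mx x0 + L * Rad x0" using y L0 by (intro add_left_mono mult_left_mono) (auto simp: dist_commute)
  also have "\<dots> = Rad x0" using L1 by (simp add: Rad_def field_simps)
  finally show "\<phi> i y \<in> cball x0 (Rad x0)" by simp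
qed

lemma comp_inv: "set u \<subseteq> {1..N} \<Longrightarrow> (\<And>i. i \<in> {1..N} \<Longrightarrow> \<phi> i ` S \<subseteq> S) \<Longrightarrow> y \<in> S \<Longrightarrow> comp \<phi> u y \<in> S"
  by (induct u) auto

lemma comp_bound: "set u \<subseteq> {1..N} \<Longrightarrow> dist x0 (comp \<phi> u x0) \<le> Rad x0"
  using comp_inv[of u "cball x0 (Rad x0)" x0] cball_inv Rad0 by auto

lemma powL0: "(\<lambda>k. L ^ k * C) \<longlonglongrightarrow> 0"
  using LIMSEQ_power_zero[of L] L0 L1 tendsto_mult_left_zero by fastforce

lemma powL_small: "0 < e \<Longrightarrow> \<exists>n. L^n * C < e"
proof -
  assume "0 < e"
  from order_tendstoD(2)[OF powL0 this] show ?thesis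
    unfolding eventually_sequentially by auto
qed

lemma fcomp_near:
  assumes \<sigma>: "\<sigma> \<in> code_space N"
  shows "dist (fcomp \<phi> \<sigma> (k+m) y) (fcomp \<phi> \<sigma> k y) \<le> L^k * Rad y"
proof -
  have "fcomp \<phi> \<sigma> (k+m) y = comp \<phi> (map \<sigma> [0..<k]) (comp \<phi> (map (\<lambda>j. \<sigma> (j+k)) [0..<m]) y)"
    by (simp add: fcomp_eq map_upt_add comp_append)
  then have "dist (fcomp \<phi> \<sigma> (k+m) y) (fcomp \<phi> \<sigma> k y) \<le> L^k * dist (comp \<phi> (map (\<lambda>j. \<sigma> (j+k)) [0..<m]) y) y"
    using comp_lip[OF code_space_set[OF \<sigma>, of k]] by (simp add: fcomp_eq)
  also have "\<dots> \<le> L^k * Rad y"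
    using comp_bound[OF code_space_set[OF code_space_shift[OF \<sigma>, of k], of m], of y] L0
    by (intro mult_left_mono) (auto simp: dist_commute)
  finally show ?thesis .
qed

lemma fcomp_Cauchy:
  assumes \<sigma>: "\<sigma> \<in> code_space N"
  shows "Cauchy (\<lambda>k. fcomp \<phi> \<sigma> k y)"
proof (rule metric_CauchyI)
  fix e :: real assume e: "0 < e"
  obtain M :: nat where M: "L^M * Rad y < e/2"
    using powL_small[of "e/2" "Rad y"] e by auto
  show "\<exists>M. \<forall>m\<ge>M. \<forall>n\<ge>M. dist (fcomp \<phi> \<sigma> m y) (fcomp \<phi> \<sigma> n y) < e"
  proof (intro exI[of _ M] allI impI)
    fix p q :: nat assume "M \<le> p" "M \<le> q"
    then have "dist (fcomp \<phi> \<sigma> p y) (fcomp \<phi> \<sigma> M y) \<le> L^M * Rad y"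
         "dist (fcomp \<phi> \<sigma> q y) (fcomp \<phi> \<sigma> M y) \<le> L^M * Rad y"
      using fcomp_near[OF \<sigma>, of M "p-M" y] fcomp_near[OF \<sigma>, of M "q-M" y] by auto
    then show "dist (fcomp \<phi> \<sigma> p y) (fcomp \<phi> \<sigma> q y) < e"
      using M dist_triangle2[of "fcomp \<phi> \<sigma> p y" "fcomp \<phi> \<sigma> q y" "fcomp \<phi> \<sigma> M y"] by linarith
  qed
qed

lemma fcomp_tendsto:
  assumes \<sigma>: "\<sigma> \<in> code_space N"
  shows "(\<lambda>k. fcomp \<phi> \<sigma> k y) \<longlonglongrightarrow> address \<phi> \<sigma>"
proof -
  have "(\<lambda>k. fcomp \<phi> \<sigma> k undefined) \<longlonglongrightarrow> address \<phi> \<sigma>"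
    using fcomp_Cauchy[OF \<sigma>] unfolding address_def
    by (simp add: Cauchy_convergent_iff convergent_LIMSEQ_iff)
  moreover have "dist (fcomp \<phi> \<sigma> k y) (fcomp \<phi> \<sigma> k undefined) \<le> L^k * dist y undefined" for k
    using comp_lip[OF code_space_set[OF \<sigma>, of k]] by (simp add: fcomp_eq)
  ultimately show ?thesis
    using tendsto_by_dist_bound[of "\<lambda>k. fcomp \<phi> \<sigma> k y" "\<lambda>k. fcomp \<phi> \<sigma> k undefined" "\<lambda>k. L^k * dist y undefined"] powL0 by blast
qed

lemma address_shift:
  assumes \<sigma>: "\<sigma> \<in> code_space N"
  shows "address \<phi> \<sigma> = comp \<phi> (map \<sigma> [0..<k]) (address \<phi> (\<lambda>j. \<sigma> (j+k)))"
proof -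
  let ?p = "map \<sigma> [0..<k]" and ?s = "\<lambda>j. \<sigma> (j+k)"
  have l1: "(\<lambda>m. fcomp \<phi> \<sigma> (m+k) undefined) \<longlonglongrightarrow> address \<phi> \<sigma>"
    using fcomp_tendsto[OF \<sigma>] by (rule LIMSEQ_ignore_initial_segment)
  have eq: "fcomp \<phi> \<sigma> (m+k) y = comp \<phi> ?p (fcomp \<phi> ?s m y)" for m y
    by (simp add: fcomp_eq map_upt_add comp_append add.commute)
  have l2: "(\<lambda>m. comp \<phi> ?p (fcomp \<phi> ?s m y)) \<longlonglongrightarrow> comp \<phi> ?p (address \<phi> ?s)" for y
  proof (rule tendsto_by_dist_bound)
    show "dist (comp \<phi> ?p (fcomp \<phi> ?s m y)) (comp \<phi> ?p (address \<phi> ?s)) \<le> L^k * dist (fcomp \<phi> ?s m y) (address \<phi> ?s)" for m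
      using comp_lip[OF code_space_set[OF \<sigma>, of k]] by simp
    show "(\<lambda>m. L^k * dist (fcomp \<phi> ?s m y) (address \<phi> ?s)) \<longlonglongrightarrow> 0"
      using fcomp_tendsto[OF code_space_shift[OF \<sigma>]] tendsto_dist_iff tendsto_mult_right_zero by blast
  qed simp
  from l1 have "(\<lambda>m. comp \<phi> ?p (fcomp \<phi> ?s m undefined)) \<longlonglongrightarrow> address \<phi> \<sigma>" by (simp only: eq)
  from LIMSEQ_unique[OF this l2] show ?thesis .
qed

lemma address_in_closed:
  assumes \<sigma>: "\<sigma> \<in> code_space N" and S: "closed S" "y \<in> S" "\<And>i. i \<in> {1..N} \<Longrightarrow> \<phi> i ` S \<subseteq> S"
  shows "address \<phi> \<sigma> \<in> S"
  using closed_sequentially[OF S(1) _ fcomp_tendsto[OF \<sigma>, of y]]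
    comp_inv[OF code_space_set[OF \<sigma>] S(3) S(2)] by (simp add: fcomp_eq)

lemma address_bound: "\<sigma> \<in> code_space N \<Longrightarrow> dist x0 (address \<phi> \<sigma>) \<le> Rad x0"
  using address_in_closed[of \<sigma> "cball x0 (Rad x0)" x0] cball_inv Rad0 by auto

definition K :: "'a set" where "K = address \<phi> ` code_space N"

lemma K_cover_ball:
  assumes "e > 0"
  shows "\<exists>k. finite k \<and> K \<subseteq> (\<Union>x\<in>k. cball x e)"
proof -
  obtain x0 :: 'a where True by simp
  obtain n where n: "L^n * Rad x0 < e"
    using powL_small[of e "Rad x0"] assms by auto
  let ?W = "{u. set u \<subseteq> {1..N} \<and> length u = n}"
  have "K \<subseteq> (\<Union>y\<in>(\<lambda>u. comp \<phi> u x0) ` ?W. cball y e)"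
  proof
    fix x assume "x \<in> K"
    then obtain \<sigma> where \<sigma>: "\<sigma> \<in> code_space N" and x: "x = address \<phi> \<sigma>" by (auto simp: K_def)
    let ?u = "map \<sigma> [0..<n]"
    have "dist (comp \<phi> ?u x0) x = dist (comp \<phi> ?u x0) (comp \<phi> ?u (address \<phi> (\<lambda>j. \<sigma> (j+n))))"
      using address_shift[OF \<sigma>, of n] x by simp
    also have "\<dots> \<le> L^n * dist x0 (address \<phi> (\<lambda>j. \<sigma> (j+n)))"
      using comp_lip[OF code_space_set[OF \<sigma>]] by simp
    also have "\<dots> \<le> L^n * Rad x0"
      using address_bound[OF code_space_shift[OF \<sigma>]] L0 by (intro mult_left_mono) auto
    finally have "dist (comp \<phi> ?u x0) x \<le> e" using n by simp
    moreover have "comp \<phi> ?u x0 \<in> (\<lambda>u. comp \<phi> u x0) ` ?W"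
      using code_space_set[OF \<sigma>, of n] by (intro imageI) simp
    ultimately show "x \<in> (\<Union>y\<in>(\<lambda>u. comp \<phi> u x0) ` ?W. cball y e)"
      by (intro UN_I[of "comp \<phi> ?u x0"]) auto
  qed
  moreover have "finite ((\<lambda>u. comp \<phi> u x0) ` ?W)" using finite_lists_length_eq by auto
  ultimately show ?thesis by (intro exI[of _ "(\<lambda>u. comp \<phi> u x0) ` ?W"] conjI)
qed

lemma K_nonempty: "K \<noteq> {}"
proof -
  have "(\<lambda>_. 1) \<in> code_space N" using N1 by (auto simp: code_space_def)
  then show ?thesis by (auto simp: K_def)
qed

lemma cons_code: "i \<in> {1..N} \<Longrightarrow> \<omega> \<in> code_space N \<Longrightarrow> (\<lambda>j. if j = 0 then i else \<omega> (j - 1)) \<in> code_space N"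
  by (auto simp: code_space_def)

lemma K_inv: "K = (\<Union>i\<in>{1..N}. \<phi> i ` K)"
proof
  show "K \<subseteq> (\<Union>i\<in>{1..N}. \<phi> i ` K)"
  proof
    fix x assume "x \<in> K"
    then obtain \<sigma> where \<sigma>: "\<sigma> \<in> code_space N" and x: "x = address \<phi> \<sigma>" by (auto simp: K_def)
    have "x = \<phi> (\<sigma> 0) (address \<phi> (\<lambda>j. \<sigma> (j+1)))" using address_shift[OF \<sigma>, of 1] x by simp
    moreover have "\<sigma> 0 \<in> {1..N}" using \<sigma> by (auto simp: code_space_def)
    moreover have "address \<phi> (\<lambda>j. \<sigma> (j+1)) \<in> K" using code_space_shift[OF \<sigma>, of 1] by (auto simp: K_def)
    ultimately show "x \<in> (\<Union>i\<in>{1..N}. \<phi> i ` K)" by blast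
  qed
  show "(\<Union>i\<in>{1..N}. \<phi> i ` K) \<subseteq> K"
  proof (rule UN_least, rule image_subsetI)
    fix i x assume i: "i \<in> {1..N}" and "x \<in> K"
    then obtain \<omega> where \<omega>: "\<omega> \<in> code_space N" and x: "x = address \<phi> \<omega>" by (auto simp: K_def)
    let ?c = "\<lambda>j. if j = 0 then i else \<omega> (j - 1)"
    have e2: "(\<lambda>j. ?c (j+1)) = \<omega>" by auto
    have "address \<phi> ?c = comp \<phi> (map ?c [0..<1]) (address \<phi> (\<lambda>j. ?c (j+1)))"
      by (rule address_shift[OF cons_code[OF i \<omega>]])
    moreover have m: "map ?c [0..<1] = [i]" by simp
    ultimately have "address \<phi> ?c = \<phi> i (address \<phi> \<omega>)" by (simp only: e2 m comp.simps o_apply id_apply)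
    then have eq: "\<phi> i x = address \<phi> ?c" using x by simp
    show "\<phi> i x \<in> K" unfolding K_def by (rule image_eqI[where f="address \<phi>", OF eq cons_code[OF i \<omega>]])
  qed
qed

lemma phi_cont: "i \<in> {1..N} \<Longrightarrow> continuous_on S (\<phi> i)"
  using lip L0 by (intro lip_continuous_on[of _ L]) auto

lemma closure_K_compact: "compact (closure K)"
  unfolding compact_eq_totally_bounded
proof (intro conjI allI impI)
  show "complete (closure K)" using complete_eq_closed by blast
  fix e :: real assume e: "e > 0"
  obtain k where k: "finite k" "K \<subseteq> (\<Union>x\<in>k. cball x (e/2))" using K_cover_ball[of "e/2"] e by auto
  have "closure K \<subseteq> (\<Union>x\<in>k. cball x (e/2))"
    using k by (intro closure_minimal) (auto intro!: closed_UN)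
  also have "\<dots> \<subseteq> (\<Union>x\<in>k. ball x e)" using e by auto
  finally show "\<exists>k. finite k \<and> closure K \<subseteq> (\<Union>x\<in>k. ball x e)" using k by blast
qed

lemma closure_K_inv: "closure K = (\<Union>i\<in>{1..N}. \<phi> i ` closure K)"
proof
  have "compact (\<Union>i\<in>{1..N}. \<phi> i ` closure K)"
    using closure_K_compact phi_cont by (intro compact_UN compact_continuous_image) auto
  moreover have "K \<subseteq> (\<Union>i\<in>{1..N}. \<phi> i ` closure K)"
    using K_inv closure_subset by fastforce
  ultimately show "closure K \<subseteq> (\<Union>i\<in>{1..N}. \<phi> i ` closure K)"
    using closure_minimal compact_imp_closed by blast
  show "(\<Union>i\<in>{1..N}. \<phi> i ` closure K) \<subseteq> closure K"
  proof safe
    fix i x assume i: "i \<in> {1..N}" and x: "x \<in> closure K"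
    have "\<phi> i ` K \<subseteq> K" using K_inv i by blast
    then have "\<phi> i ` closure K \<subseteq> closure K"
      using i closure_subset by (intro image_closure_subset phi_cont) auto
    then show "\<phi> i x \<in> closure K" using x by auto
  qed
qed

lemma inv_eq_K:
  assumes A: "compact A" "A \<noteq> {}" "A = (\<Union>i\<in>{1..N}. \<phi> i ` A)"
  shows "A = K"
proof
  have inv: "\<phi> i ` A \<subseteq> A" if "i \<in> {1..N}" for i using A(3) that by blast
  obtain y where y: "y \<in> A" using A(2) by auto
  show "K \<subseteq> A" unfolding K_def
    using address_in_closed[OF _ compact_imp_closed[OF A(1)] y inv] by auto
  show "A \<subseteq> K"
  proof
    fix a assume a: "a \<in> A"
    have "\<forall>b\<in>A. \<exists>p. fst p \<in> {1..N} \<and> snd p \<in> A \<and> b = \<phi> (fst p) (snd p)"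
      using A(3) by fastforce
    then obtain sel where sel: "\<And>b. b \<in> A \<Longrightarrow> fst (sel b) \<in> {1..N} \<and> snd (sel b) \<in> A \<and> b = \<phi> (fst (sel b)) (snd (sel b))"
      by metis
    define pts where "pts = rec_nat a (\<lambda>_ b. snd (sel b))"
    have pts0: "pts 0 = a" and ptsS: "pts (Suc k) = snd (sel (pts k))" for k by (simp_all add: pts_def)
    define \<sigma> where "\<sigma> k = fst (sel (pts k))" for k
    have ptsA: "pts k \<in> A" for k by (induct k) (auto simp: pts0 ptsS a sel)
    have \<sigma>: "\<sigma> \<in> code_space N" using sel ptsA by (auto simp: code_space_def \<sigma>_def)
    have rep: "a = comp \<phi> (map \<sigma> [0..<k]) (pts k)" for k
    proof (induct k)
      case 0 then show ?case by (simp add: pts0)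
      case (Suc k)
      have "pts k = \<phi> (\<sigma> k) (pts (Suc k))" using sel[OF ptsA[of k]] by (simp add: \<sigma>_def ptsS)
      then show ?case using Suc by (simp add: comp_append)
    qed
    obtain B where B: "\<forall>b\<in>A. dist y b \<le> B"
      using compact_imp_bounded[OF A(1)] bounded_any_center by blast
    have "dist (fcomp \<phi> \<sigma> k y) a \<le> L^k * B" for k
    proof -
      have "dist (fcomp \<phi> \<sigma> k y) a = dist (comp \<phi> (map \<sigma> [0..<k]) y) (comp \<phi> (map \<sigma> [0..<k]) (pts k))"
        using rep[of k] by (simp add: fcomp_eq)
      also have "\<dots> \<le> L^k * dist y (pts k)" using comp_lip[OF code_space_set[OF \<sigma>]] by simp
      also have "\<dots> \<le> L^k * B" using B ptsA L0 by (intro mult_left_mono) auto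
      finally show ?thesis .
    qed
    then have "(\<lambda>k. fcomp \<phi> \<sigma> k y) \<longlonglongrightarrow> a"
      using tendsto_by_dist_bound[of "\<lambda>k. fcomp \<phi> \<sigma> k y" "\<lambda>_. a" "\<lambda>k. L^k * B"] powL0 by blast
    then have "a = address \<phi> \<sigma>" using fcomp_tendsto[OF \<sigma>] LIMSEQ_unique by blast
    then show "a \<in> K" using \<sigma> by (auto simp: K_def)
  qed
qed

lemma attractor_eq: "attractor N \<phi> = K" and K_compact: "compact K"
proof -
  have ne: "closure K \<noteq> {}" using K_nonempty by (simp add: closure_eq_empty)
  have ck: "closure K = K"
    by (rule inv_eq_K[OF closure_K_compact ne closure_K_inv])
  have cK: "compact K" using closure_K_compact by (simp only: ck)
  have "(THE A. compact A \<and> A \<noteq> {} \<and> A = (\<Union>i\<in>{1..N}. \<phi> i ` A)) = K"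
  proof (rule the_equality)
    show "compact K \<and> K \<noteq> {} \<and> K = (\<Union>i\<in>{1..N}. \<phi> i ` K)"
      using cK K_nonempty K_inv by blast
    fix A assume "compact A \<and> A \<noteq> {} \<and> A = (\<Union>i\<in>{1..N}. \<phi> i ` A)"
    then show "A = K" using inv_eq_K by blast
  qed
  then show "attractor N \<phi> = K" by (simp only: attractor_def)
  show "compact K" by (rule cK)
qed

end



lemma lex_antisym: "lex_le a b \<Longrightarrow> lex_le b a \<Longrightarrow> a = b"
proof (rule ccontr)
  assume ab: "lex_le a b" "lex_le b a" "a \<noteq> b"
  then obtain k1 where k1: "\<forall>j<k1. a j = b j" "a k1 < b k1" by (auto simp: lex_le_def lex_less_def)
  from ab obtain k2 where k2: "\<forall>j<k2. b j = a j" "b k2 < a k2" by (auto simp: lex_le_def lex_less_def)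
  show False
  proof (cases k1 k2 rule: linorder_cases)
    case less then show ?thesis using k1 k2 by force
  next
    case equal then show ?thesis using k1 k2 by simp
  next
    case greater then show ?thesis using k1 k2 by force
  qed
qed

context ifsL begin

lemma tops_props:
  assumes x: "x \<in> K"
  shows "tops N \<phi> x \<in> code_space N \<and> address \<phi> (tops N \<phi> x) = x"
proof -
  define Adr where "Adr = {\<omega> \<in> code_space N. address \<phi> \<omega> = x}"
  define D where "D k p = {d. \<exists>\<omega>\<in>Adr. map \<omega> [0..<k] = p \<and> \<omega> k = d}" for k p
  define pre where "pre = rec_nat [] (\<lambda>k p. p @ [Max (D k p)])"
  have pre0: "pre 0 = []" and preS: "pre (Suc k) = pre k @ [Max (D k (pre k))]" for k
    by (simp_all add: pre_def)
  have len: "length (pre k) = k" for k by (induct k) (simp_all add: pre0 preS)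
  have Dfin: "finite (D k p)" "D k p \<subseteq> {1..N}" for k p
  proof -
    show "D k p \<subseteq> {1..N}" by (auto simp: D_def Adr_def code_space_def)
    then show "finite (D k p)" using finite_subset by blast
  qed
  have inv: "\<exists>\<omega>\<in>Adr. map \<omega> [0..<k] = pre k" for k
  proof (induct k)
    case 0
    from x obtain \<omega> where "\<omega> \<in> code_space N" "x = address \<phi> \<omega>" by (auto simp: K_def)
    then show ?case by (auto simp: Adr_def pre0)
  next
    case (Suc k)
    then obtain \<omega> where "\<omega> \<in> Adr" "map \<omega> [0..<k] = pre k" by blast
    then have "\<omega> k \<in> D k (pre k)" by (auto simp: D_def)
    then have "Max (D k (pre k)) \<in> D k (pre k)" using Dfin by (intro Max_in) auto
    then obtain \<omega>' where "\<omega>' \<in> Adr" "map \<omega>' [0..<k] = pre k" "\<omega>' k = Max (D k (pre k))"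
      by (auto simp: D_def)
    then show ?case by (intro bexI[of _ \<omega>']) (auto simp: preS)
  qed
  have Dne: "D k (pre k) \<noteq> {}" for k
    using inv[of k] by (auto simp: D_def)
  have pre_nth: "j < k \<Longrightarrow> pre k ! j = pre (Suc j) ! j" for j k
  proof (induct k)
    case (Suc k)
    show ?case
    proof (cases "j < k")
      case True then show ?thesis using Suc by (simp add: preS nth_append len)
    next
      case False then have "j = k" using Suc.prems by simp
      then show ?thesis by simp
    qed
  qed simp
  define \<sigma> where "\<sigma> j = pre (Suc j) ! j" for j
  have \<sigma>max: "\<sigma> j = Max (D j (pre j))" for j by (simp add: \<sigma>_def preS nth_append len)
  have pref: "map \<sigma> [0..<k] = pre k" for k
  proof (rule nth_equalityI)
    show "length (map \<sigma> [0..<k]) = length (pre k)" by (simp add: len)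
    fix j assume "j < length (map \<sigma> [0..<k])"
    then have j: "j < k" by simp
    have "map \<sigma> [0..<k] ! j = \<sigma> j" using j by simp
    also have "\<dots> = pre k ! j" unfolding \<sigma>_def using pre_nth[OF j] by simp
    finally show "map \<sigma> [0..<k] ! j = pre k ! j" .
  qed
  have \<sigma>cs: "\<sigma> \<in> code_space N"
    unfolding code_space_def
  proof safe
    fix j
    have "\<sigma> j \<in> D j (pre j)" using \<sigma>max Max_in[OF Dfin(1) Dne] by simp
    then show "\<sigma> j \<in> {1..N}" using Dfin(2) by blast
  qed
  obtain x0 :: 'a where True by simp
  have bnd: "dist (fcomp \<phi> \<sigma> k x0) x \<le> L^k * Rad x0" for k
  proof -
    obtain \<omega> where \<omega>: "\<omega> \<in> Adr" "map \<omega> [0..<k] = pre k" using inv by blast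
    then have \<omega>cs: "\<omega> \<in> code_space N" and ax: "address \<phi> \<omega> = x" by (auto simp: Adr_def)
    have "x = comp \<phi> (pre k) (address \<phi> (\<lambda>j. \<omega> (j+k)))"
      using address_shift[OF \<omega>cs, of k] ax \<omega>(2) by simp
    then have "dist (fcomp \<phi> \<sigma> k x0) x = dist (comp \<phi> (map \<sigma> [0..<k]) x0) (comp \<phi> (map \<sigma> [0..<k]) (address \<phi> (\<lambda>j. \<omega> (j+k))))"
      by (simp add: fcomp_eq pref)
    also have "\<dots> \<le> L^k * dist x0 (address \<phi> (\<lambda>j. \<omega> (j+k)))"
      using comp_lip[OF code_space_set[OF \<sigma>cs]] by simp
    also have "\<dots> \<le> L^k * Rad x0"
      using address_bound[OF code_space_shift[OF \<omega>cs, of k], of x0] L0 by (intro mult_left_mono) simp_all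
    finally show ?thesis .
  qed
  have "(\<lambda>k. fcomp \<phi> \<sigma> k x0) \<longlonglongrightarrow> x"
    using tendsto_by_dist_bound[of "\<lambda>k. fcomp \<phi> \<sigma> k x0" "\<lambda>_. x" "\<lambda>k. L^k * Rad x0"] bnd powL0 by blast
  then have a\<sigma>: "address \<phi> \<sigma> = x" using fcomp_tendsto[OF \<sigma>cs] LIMSEQ_unique by blast
  have maxp: "lex_le \<omega> \<sigma>" if \<omega>: "\<omega> \<in> code_space N" "address \<phi> \<omega> = x" for \<omega>
  proof (cases "\<omega> = \<sigma>")
    case True then show ?thesis by (simp add: lex_le_def)
  next
    case False
    then obtain j where "\<omega> j \<noteq> \<sigma> j" by auto
    define k where "k = (LEAST j. \<omega> j \<noteq> \<sigma> j)"
    have k: "\<omega> k \<noteq> \<sigma> k" unfolding k_def by (rule LeastI) fact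
    have below: "\<forall>j<k. \<omega> j = \<sigma> j" unfolding k_def using not_less_Least by blast
    have "map \<omega> [0..<k] = map \<sigma> [0..<k]" by (rule map_cong) (simp_all add: below)
    then have "map \<omega> [0..<k] = pre k" using pref[of k] by simp
    then have "\<omega> k \<in> D k (pre k)" using \<omega> by (auto simp: D_def Adr_def)
    then have "\<omega> k \<le> \<sigma> k" using \<sigma>max Dfin(1) by simp
    then have "\<omega> k < \<sigma> k" using k by simp
    then show ?thesis using below by (auto simp: lex_le_def lex_less_def)
  qed
  have "tops N \<phi> x = \<sigma>"
    unfolding tops_def
  proof (rule the_equality)
    show "\<sigma> \<in> code_space N \<and> address \<phi> \<sigma> = x \<and> (\<forall>\<omega>\<in>code_space N. address \<phi> \<omega> = x \<longrightarrow> lex_le \<omega> \<sigma>)"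
      using \<sigma>cs a\<sigma> maxp by blast
    fix \<tau> assume "\<tau> \<in> code_space N \<and> address \<phi> \<tau> = x \<and> (\<forall>\<omega>\<in>code_space N. address \<phi> \<omega> = x \<longrightarrow> lex_le \<omega> \<tau>)"
    then have "lex_le \<sigma> \<tau>" "lex_le \<tau> \<sigma>" using \<sigma>cs a\<sigma> maxp by auto
    then show "\<tau> = \<sigma>" by (rule lex_antisym[rotated])
  qed
  then show ?thesis using \<sigma>cs a\<sigma> by simp
qed

end



lemma diam_le: "(\<And>x y. x \<in> U \<Longrightarrow> y \<in> U \<Longrightarrow> d x y \<le> t) \<Longrightarrow> diam_wrt d U \<le> ennreal t"
  unfolding diam_wrt_def by (intro SUP_least ennreal_leI) auto

lemma diam_ge: "x \<in> U \<Longrightarrow> y \<in> U \<Longrightarrow> ennreal (d x y) \<le> diam_wrt d U"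
proof -
  assume xy: "x \<in> U" "y \<in> U"
  have "ennreal (d x y) \<le> (SUP y\<in>U. ennreal (d x y))" by (rule SUP_upper) (rule xy(2))
  also have "\<dots> \<le> (SUP x\<in>U. SUP y\<in>U. ennreal (d x y))" by (rule SUP_upper) (rule xy(1))
  finally show ?thesis unfolding diam_wrt_def .
qed

lemma diam_pow_le:
  assumes "0 < s" "0 \<le> t" "diam_wrt d U \<le> ennreal t"
  shows "diam_pow d s U \<le> ennreal (t powr s)"
proof (cases "U = {}")
  case True then show ?thesis by (simp add: diam_pow_def)
next
  case False
  have ninf: "diam_wrt d U \<noteq> \<infinity>"
  proof
    assume "diam_wrt d U = \<infinity>"
    with assms(3) have "\<infinity> \<le> ennreal t" by simp
    then show False by (simp add: top_unique)
  qed
  have "enn2real (diam_wrt d U) \<le> t" using assms by (intro enn2real_leI) auto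
  then have "enn2real (diam_wrt d U) powr s \<le> t powr s" using assms(1) by (intro powr_mono2) auto
  then show ?thesis using False ninf assms(1) by (simp add: diam_pow_def ennreal_leI)
qed

lemma diam_pow_ge:
  assumes "0 < s" "x \<in> U" "y \<in> U" "0 \<le> t" "t \<le> d x y"
  shows "ennreal (t powr s) \<le> diam_pow d s U"
proof -
  have ne: "U \<noteq> {}" using assms by auto
  show ?thesis
  proof (cases "diam_wrt d U = \<infinity>")
    case True then show ?thesis using ne assms(1) by (simp add: diam_pow_def)
  next
    case False
    have "ennreal t \<le> ennreal (d x y)" using assms by (intro ennreal_leI) auto
    also have "\<dots> \<le> diam_wrt d U" using diam_ge assms by fast
    also have "\<dots> = ennreal (enn2real (diam_wrt d U))" using False by (simp add: ennreal_enn2real_if)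
    finally have "t \<le> enn2real (diam_wrt d U)" by (simp add: ennreal_le_iff)
    then have "t powr s \<le> enn2real (diam_wrt d U) powr s" using assms by (intro powr_mono2) auto
    then show ?thesis using ne False assms(1) by (simp add: diam_pow_def ennreal_leI)
  qed
qed

lemma diam_pow_mono:
  assumes "0 < s" "U = {} \<longleftrightarrow> V = {}" "diam_wrt d U \<le> diam_wrt d' V"
  shows "diam_pow d s U \<le> diam_pow d' s V"
proof (cases "V = {}")
  case True then show ?thesis using assms by (simp add: diam_pow_def)
next
  case False
  show ?thesis
  proof (cases "diam_wrt d' V = \<infinity>")
    case True then show ?thesis using False assms(1) by (simp add: diam_pow_def)
  next
    case fin: False
    have eq: "diam_wrt d' V = ennreal (enn2real (diam_wrt d' V))" using fin by (simp add: ennreal_enn2real_if)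
    have "diam_pow d s U \<le> ennreal (enn2real (diam_wrt d' V) powr s)"
      using assms(3) eq by (intro diam_pow_le[OF assms(1)]) auto
    also have "\<dots> = diam_pow d' s V" using False fin assms(1) by (simp add: diam_pow_def)
    finally show ?thesis .
  qed
qed

lemma prod_list_nonneg': "(\<And>v. v \<in> set u \<Longrightarrow> 0 \<le> \<rho> v) \<Longrightarrow> 0 \<le> (prod_list (map \<rho> u) :: real)"
  by (induct u) auto

lemma prod_list_powr:
  fixes \<rho> :: "nat \<Rightarrow> real"
  shows "(\<And>v. v \<in> set u \<Longrightarrow> 0 \<le> \<rho> v) \<Longrightarrow> prod_list (map \<rho> u) powr s = prod_list (map (\<lambda>v. \<rho> v powr s) u)"
proof (induct u)
  case (Cons v u)
  have "0 \<le> prod_list (map \<rho> u)" using Cons.prems by (intro prod_list_nonneg') auto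
  then show ?case using Cons by (simp add: powr_mult)
qed simp


lemma tree_cover:
  fixes w :: "nat \<Rightarrow> real" and P :: "nat \<Rightarrow> bool" and u :: "nat \<Rightarrow> nat list"
  assumes w0: "\<And>v. 0 \<le> w v" and wsum: "1 \<le> (\<Sum>v\<in>{1..M}. w v)"
    and cov: "\<And>\<xi>. (\<forall>k. \<xi> k \<in> {1..M}) \<Longrightarrow> \<exists>i. P i \<and> map \<xi> [0..<length (u i)] = u i"
  shows "1 \<le> (\<Sum>i. if P i then ennreal (prod_list (map w (u i))) else 0)"
proof (rule ccontr)
  define W where "W x = ennreal (prod_list (map w x))" for x
  define S where "S x = (\<Sum>i. if P i \<and> (\<exists>z. u i = x @ z) then W (u i) else 0)" for x
  assume "\<not> 1 \<le> (\<Sum>i. if P i then ennreal (prod_list (map w (u i))) else 0)"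
  then have root: "S [] < W []" unfolding S_def W_def by (simp add: not_le)
  have trm: "W (u i) \<le> S (u i)" if "P i" for i
  proof -
    have "(\<Sum>n\<in>{i}. (if P n \<and> (\<exists>z. u n = u i @ z) then W (u n) else 0)) \<le> S (u i)"
      unfolding S_def by (rule sum_le_suminf) auto
    then show ?thesis using that by simp
  qed
  have Wapp: "W (x @ [v]) = W x * ennreal (w v)" for x v
    unfolding W_def using w0 by (simp add: ennreal_mult prod_list_nonneg')
  have split: "(\<Sum>v\<in>{1..M}. S (x@[v])) \<le> S x" if nx: "\<forall>i. P i \<longrightarrow> u i \<noteq> x" for x
  proof -
    have "(\<Sum>v\<in>{1..M}. S (x@[v])) = (\<Sum>i. \<Sum>v\<in>{1..M}. (if P i \<and> (\<exists>z. u i = (x @ [v]) @ z) then W (u i) else 0))"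
      unfolding S_def by (rule suminf_sum[symmetric]) simp
    also have "\<dots> \<le> S x"
      unfolding S_def
    proof (rule suminf_le)
      fix i
      show "(\<Sum>v\<in>{1..M}. (if P i \<and> (\<exists>z. u i = (x @ [v]) @ z) then W (u i) else 0))
          \<le> (if P i \<and> (\<exists>z. u i = x @ z) then W (u i) else 0)"
      proof (cases "P i \<and> (\<exists>z. u i = x @ z)")
        case True
        then obtain z where z: "u i = x @ z" "P i" by blast
        with nx have "z \<noteq> []" by auto
        then obtain v0 z' where z': "z = v0 # z'" by (cases z) auto
        have "(\<exists>z. u i = (x @ [v]) @ z) \<longleftrightarrow> v = v0" for v using z z' by auto
        then have "(\<Sum>v\<in>{1..M}. (if P i \<and> (\<exists>z. u i = (x @ [v]) @ z) then W (u i) else 0))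
              = (\<Sum>v\<in>{1..M}. (if v = v0 then W (u i) else 0))" using z by (intro sum.cong) auto
        also have "\<dots> = (if v0 \<in> {1..M} then W (u i) else 0)" by (simp add: sum.delta)
        also have "\<dots> \<le> W (u i)" by simp
        finally show ?thesis using True by simp
      next
        case False
        have n: "\<not> (P i \<and> (\<exists>z. u i = (x @ [v]) @ z))" for v
        proof
          assume "P i \<and> (\<exists>z. u i = (x @ [v]) @ z)"
          then obtain z where "P i" "u i = x @ (v # z)" by auto
          with False show False by blast
        qed
        have "(\<Sum>v\<in>{1..M}. (if P i \<and> (\<exists>z. u i = (x @ [v]) @ z) then W (u i) else 0)) = 0"
          by (intro sum.neutral ballI) (simp only: n if_False)
        then show ?thesis by simp
      qed
    qed simp_all
    finally show ?thesis .
  qed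
  have step: "\<exists>v\<in>{1..M}. S (x@[v]) < W (x@[v])" if bad: "S x < W x" for x
  proof (rule ccontr)
    assume "\<not> (\<exists>v\<in>{1..M}. S (x@[v]) < W (x@[v]))"
    then have good: "W (x@[v]) \<le> S (x@[v])" if "v \<in> {1..M}" for v using that by (auto simp: not_less)
    have nx: "\<forall>i. P i \<longrightarrow> u i \<noteq> x"
      using trm bad by (metis leD)
    have "W x = W x * 1" by simp
    also have "\<dots> \<le> W x * ennreal (\<Sum>v\<in>{1..M}. w v)"
    proof -
      have o: "(1::ennreal) \<le> ennreal (\<Sum>v\<in>{1..M}. w v)" using ennreal_leI[OF wsum] by simp
      show ?thesis by (rule mult_left_mono[OF o]) simp
    qed
    also have "\<dots> = W x * (\<Sum>v\<in>{1..M}. ennreal (w v))" using w0 by simp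
    also have "\<dots> = (\<Sum>v\<in>{1..M}. W x * ennreal (w v))" by (rule sum_distrib_left)
    also have "\<dots> = (\<Sum>v\<in>{1..M}. W (x@[v]))" by (simp only: Wapp)
    also have "\<dots> \<le> (\<Sum>v\<in>{1..M}. S (x@[v]))" using good by (intro sum_mono) auto
    also have "\<dots> \<le> S x" using split[OF nx] .
    finally show False using bad by simp
  qed
  define nxt where "nxt x = (SOME v. v \<in> {1..M} \<and> S (x@[v]) < W (x@[v]))" for x
  have nxt: "nxt x \<in> {1..M} \<and> S (x @ [nxt x]) < W (x @ [nxt x])" if "S x < W x" for x
  proof -
    from step[OF that] have "\<exists>v. v \<in> {1..M} \<and> S (x@[v]) < W (x@[v])" by blast
    then show ?thesis unfolding nxt_def by (rule someI_ex)
  qed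
  define xs where "xs = rec_nat [] (\<lambda>_ x. x @ [nxt x])"
  have xs0: "xs 0 = []" and xsS: "xs (Suc k) = xs k @ [nxt (xs k)]" for k by (simp_all add: xs_def)
  have badk: "S (xs k) < W (xs k)" for k
    by (induct k) (auto simp: xs0 xsS root nxt)
  define \<xi> where "\<xi> k = nxt (xs k)" for k
  have \<xi>: "\<forall>k. \<xi> k \<in> {1..M}" using nxt badk by (simp add: \<xi>_def)
  have mx: "map \<xi> [0..<k] = xs k" for k by (induct k) (simp_all add: xs0 xsS \<xi>_def)
  obtain i where i: "P i" "map \<xi> [0..<length (u i)] = u i" using cov[OF \<xi>] by blast
  then have "S (u i) < W (u i)" using badk[of "length (u i)"] mx by simp
  then show False using trm[OF i(1)] by simp
qed




lemma prod_list_le_pow: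
  fixes g :: "nat \<Rightarrow> real"
  assumes "\<And>v. v \<in> set u \<Longrightarrow> 0 \<le> g v \<and> g v \<le> q"
  shows "prod_list (map g u) \<le> q ^ length u"
  using assms
proof (induct u)
  case (Cons v u)
  have "0 \<le> prod_list (map g u)" using Cons.prems by (intro prod_list_nonneg') auto
  moreover have "prod_list (map g u) \<le> q ^ length u" using Cons by auto
  moreover have "0 \<le> g v" "g v \<le> q" using Cons.prems by auto
  ultimately show ?case by (simp add: mult_mono)
qed simp

lemma geom_quarter: "(\<Sum>i. ennreal (a * (1/2)^(Suc (Suc i)))) = ennreal (a / 2)" if "0 \<le> a" for a :: real
proof -
  have sg: "summable (\<lambda>i. ((1::real)/2)^i)" by (rule summable_geometric) simp
  have "(\<Sum>i. a * (1/2)^(Suc (Suc i))) = (\<Sum>i. (a/4) * (1/2)^i)" by (simp add: field_simps)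
  also have "\<dots> = (a/4) * (\<Sum>i. ((1::real)/2)^i)" by (rule suminf_mult[OF sg])
  also have "(\<Sum>i. ((1::real)/2)^i) = 2" using suminf_geometric[of "(1::real)/2"] by simp
  finally have e: "(\<Sum>i. a * (1/2)^(Suc (Suc i))) = a / 2" by simp
  have sm: "summable (\<lambda>i. a * (1/2)^(Suc (Suc i)))"
    using summable_mult[OF sg, of "a/4"] by (simp add: field_simps)
  have "(\<Sum>i. ennreal (a * (1/2)^(Suc (Suc i)))) = ennreal (\<Sum>i. a * (1/2)^(Suc (Suc i)))"
    by (rule suminf_ennreal2[OF _ sm]) (simp add: that)
  then show ?thesis by (simp only: e)
qed

lemma LB:
  fixes h :: "nat \<Rightarrow> 'a::complete_space \<Rightarrow> 'a" and \<rho> :: "nat \<Rightarrow> real" and C :: "nat \<Rightarrow> 'a set"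
  assumes M1: "M \<ge> 1"
    and \<rho>: "\<And>v. v \<in> {1..M} \<Longrightarrow> 0 < \<rho> v \<and> \<rho> v < 1"
    and hsim: "\<And>v x y. v \<in> {1..M} \<Longrightarrow> dist (h v x) (h v y) = \<rho> v * dist x y"
    and Acl: "closed A" and Ane: "A \<noteq> {}"
    and hinv: "\<And>v. v \<in> {1..M} \<Longrightarrow> h v ` A \<subseteq> A"
    and \<delta>0: "0 < \<delta>0"
    and sep: "\<And>v v' a a'. v \<in> {1..M} \<Longrightarrow> v' \<in> {1..M} \<Longrightarrow> v \<noteq> v' \<Longrightarrow> a \<in> A \<Longrightarrow> a' \<in> A \<Longrightarrow> \<delta>0 \<le> dist (h v a) (h v' a')"
    and s: "0 < s" and sumge: "1 \<le> (\<Sum>v\<in>{1..M}. \<rho> v powr s)"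
    and cov: "A \<subseteq> (\<Union>i. C i)"
  shows "ennreal (\<delta>0 powr s / 2) \<le> (\<Sum>i. diam_pow dist s (C i))"
proof -
  define Lh where "Lh = Max (\<rho> ` {1..M})"
  have M1': "1 \<in> {1..M}" using M1 by simp
  have LhM: "\<rho> v \<le> Lh" if "v \<in> {1..M}" for v unfolding Lh_def using that by (intro Max_ge) auto
  have Lhin: "Lh \<in> \<rho> ` {1..M}" unfolding Lh_def using M1' by (intro Max_in) auto
  interpret H: ifsL M h Lh
  proof
    show "1 \<le> M" by (rule M1)
    show "0 \<le> Lh" using LhM[OF M1'] \<rho>[OF M1'] by linarith
    show "Lh < 1" using Lhin \<rho> by auto
    fix i x y assume i: "i \<in> {1..M}"
    have "dist (h i x) (h i y) = \<rho> i * dist x y" by (rule hsim[OF i])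
    also have "\<dots> \<le> Lh * dist x y" using LhM[OF i] by (intro mult_right_mono) auto
    finally show "dist (h i x) (h i y) \<le> Lh * dist x y" .
  qed
  define \<Omega> where "\<Omega> = code_space M"
  obtain a0 where a0: "a0 \<in> A" using Ane by auto
  have pA: "address h \<xi> \<in> A" if "\<xi> \<in> \<Omega>" for \<xi>
    using H.address_in_closed[OF that[unfolded \<Omega>_def] Acl a0 hinv] by simp
  have pcyl: "address h \<xi> \<in> comp h (map \<xi> [0..<k]) ` A" if "\<xi> \<in> \<Omega>" for \<xi> k
  proof -
    have "address h \<xi> = comp h (map \<xi> [0..<k]) (address h (\<lambda>j. \<xi> (j+k)))"
      using H.address_shift that by (simp add: \<Omega>_def)
    moreover have "address h (\<lambda>j. \<xi> (j+k)) \<in> A"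
      using pA code_space_shift that by (simp add: \<Omega>_def)
    ultimately show ?thesis by blast
  qed
  define rw where "rw u = prod_list (map \<rho> u)" for u
  have rw0: "0 \<le> rw u" if "set u \<subseteq> {1..M}" for u
    unfolding rw_def using that \<rho> by (intro prod_list_nonneg') (auto simp: less_imp_le)
  have sepc: "rw u * \<delta>0 \<le> dist a a'"
    if u: "set u \<subseteq> {1..M}" and v: "v \<in> {1..M}" "v' \<in> {1..M}" "v \<noteq> v'"
      and a: "a \<in> comp h (u@[v]) ` A" and a': "a' \<in> comp h (u@[v']) ` A" for u v v' a a'
  proof -
    obtain b where b: "b \<in> A" "a = comp h u (h v b)" using a by (auto simp: comp_append)
    obtain b' where b': "b' \<in> A" "a' = comp h u (h v' b')" using a' by (auto simp: comp_append)
    have "dist a a' = rw u * dist (h v b) (h v' b')"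
      unfolding b b' rw_def using u hsim by (intro comp_dist_eq) auto
    moreover have "\<delta>0 \<le> dist (h v b) (h v' b')" using sep v b b' by auto
    ultimately show ?thesis using rw0[OF u] by (simp add: mult_left_mono)
  qed
  define w where "w v = \<rho> v powr s" for v
  have w0: "0 \<le> w v" for v by (simp add: w_def)
  define qm where "qm = Max (w ` {1..M})"
  have wq: "w v \<le> qm" if "v \<in> {1..M}" for v unfolding qm_def using that by (intro Max_ge) auto
  have qm1: "qm < 1"
  proof -
    have "qm \<in> w ` {1..M}" unfolding qm_def using M1' by (intro Max_in) auto
    then obtain v where v: "v \<in> {1..M}" "qm = w v" by auto
    have "\<rho> v powr s < 1 powr s" using \<rho>[OF v(1)] s by (intro powr_less_mono2) auto
    then show ?thesis using v by (simp add: w_def)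
  qed
  have qm0: "0 \<le> qm" using wq[OF M1'] w0[of 1] by linarith
  have rwpow: "rw u powr s = prod_list (map w u)" if "set u \<subseteq> {1..M}" for u
    unfolding rw_def w_def using that \<rho> by (intro prod_list_powr) (auto simp: less_imp_le)
  have claim: "\<exists>u. set u \<subseteq> {1..M} \<and> (\<forall>\<xi>\<in>\<Omega>. address h \<xi> \<in> E \<longrightarrow> map \<xi> [0..<length u] = u) \<and>
      ennreal (\<delta>0 powr s) * ennreal (prod_list (map w u)) \<le> diam_pow dist s E + ennreal e"
    if hit: "\<exists>\<xi>\<in>\<Omega>. address h \<xi> \<in> E" and e: "0 < e" for E e
  proof -
    obtain \<xi>0 where \<xi>0: "\<xi>0 \<in> \<Omega>" "address h \<xi>0 \<in> E" using hit by blast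
    have set0: "set (map \<xi>0 [0..<k]) \<subseteq> {1..M}" for k using code_space_set \<xi>0(1) by (simp add: \<Omega>_def)
    show ?thesis
    proof (cases "\<exists>k. \<exists>\<xi>\<in>\<Omega>. address h \<xi> \<in> E \<and> \<xi> k \<noteq> \<xi>0 k")
      case True
      define j where "j = (LEAST k. \<exists>\<xi>\<in>\<Omega>. address h \<xi> \<in> E \<and> \<xi> k \<noteq> \<xi>0 k)"
      obtain \<xi>1 where \<xi>1: "\<xi>1 \<in> \<Omega>" "address h \<xi>1 \<in> E" "\<xi>1 j \<noteq> \<xi>0 j"
        using LeastI_ex[OF True] unfolding j_def by blast
      have below: "\<xi> k = \<xi>0 k" if "k < j" "\<xi> \<in> \<Omega>" "address h \<xi> \<in> E" for k \<xi>
        using not_less_Least[of k "\<lambda>k. \<exists>\<xi>\<in>\<Omega>. address h \<xi> \<in> E \<and> \<xi> k \<noteq> \<xi>0 k"] that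
        unfolding j_def by blast
      define u where "u = map \<xi>0 [0..<j]"
      have pre: "map \<xi> [0..<length u] = u" if "\<xi> \<in> \<Omega>" "address h \<xi> \<in> E" for \<xi>
      proof -
        have "map \<xi> [0..<j] = map \<xi>0 [0..<j]" by (rule map_cong[OF refl]) (simp add: below that)
        then show ?thesis by (simp add: u_def)
      qed
      have u1: "map \<xi>1 [0..<Suc j] = u @ [\<xi>1 j]" using pre[OF \<xi>1(1,2)] by (simp add: u_def)
      have u0: "map \<xi>0 [0..<Suc j] = u @ [\<xi>0 j]" by (simp add: u_def)
      have lt: "\<xi>0 j \<in> {1..M}" "\<xi>1 j \<in> {1..M}" using \<xi>0(1) \<xi>1(1) by (auto simp: \<Omega>_def code_space_def)
      have us: "set u \<subseteq> {1..M}" unfolding u_def by (rule set0)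
      have "rw u * \<delta>0 \<le> dist (address h \<xi>0) (address h \<xi>1)"
        using sepc[OF us lt(1) lt(2) _ ] \<xi>1(3) pcyl[OF \<xi>0(1), of "Suc j"] pcyl[OF \<xi>1(1), of "Suc j"] u0 u1
        by (metis)
      then have "ennreal ((rw u * \<delta>0) powr s) \<le> diam_pow dist s E"
        using rw0[OF us] \<delta>0 \<xi>0(2) \<xi>1(2) by (intro diam_pow_ge[OF s]) auto
      moreover have "(rw u * \<delta>0) powr s = \<delta>0 powr s * prod_list (map w u)"
        using rw0[OF us] \<delta>0 rwpow[OF us] by (simp add: powr_mult)
      moreover have "0 \<le> prod_list (map w u)" using w0 by (intro prod_list_nonneg') auto
      ultimately have "ennreal (\<delta>0 powr s) * ennreal (prod_list (map w u)) \<le> diam_pow dist s E"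
        using ennreal_mult[of "\<delta>0 powr s" "prod_list (map w u)"] by simp
      then have "ennreal (\<delta>0 powr s) * ennreal (prod_list (map w u)) \<le> diam_pow dist s E + ennreal e"
        by (rule add_increasing2[OF zero_le])
      then show ?thesis using us pre by blast
    next
      case False
      then have same: "\<xi> k = \<xi>0 k" if "\<xi> \<in> \<Omega>" "address h \<xi> \<in> E" for \<xi> k using that by blast
      have "(\<lambda>k. \<delta>0 powr s * qm ^ k) \<longlonglongrightarrow> \<delta>0 powr s * 0"
        using qm0 qm1 by (intro tendsto_mult tendsto_const LIMSEQ_power_zero) simp
      from order_tendstoD(2)[OF this, of e] e obtain k where k: "\<delta>0 powr s * qm ^ k < e"
        by (auto simp: eventually_sequentially)
      define u where "u = map \<xi>0 [0..<k]"
      have us: "set u \<subseteq> {1..M}" unfolding u_def by (rule set0)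
      have pre: "\<forall>\<xi>\<in>\<Omega>. address h \<xi> \<in> E \<longrightarrow> map \<xi> [0..<length u] = u"
        unfolding u_def using same by simp
      have "prod_list (map w u) \<le> qm ^ length u"
        using us w0 wq by (intro prod_list_le_pow) auto
      then have "\<delta>0 powr s * prod_list (map w u) \<le> \<delta>0 powr s * qm ^ k"
        by (simp add: u_def mult_left_mono)
      then have "\<delta>0 powr s * prod_list (map w u) \<le> e" using k by linarith
      then have "ennreal (\<delta>0 powr s * prod_list (map w u)) \<le> ennreal e" by (rule ennreal_leI)
      moreover have "0 \<le> prod_list (map w u)" using w0 by (intro prod_list_nonneg') auto
      ultimately have "ennreal (\<delta>0 powr s) * ennreal (prod_list (map w u)) \<le> ennreal e"
        using ennreal_mult[of "\<delta>0 powr s" "prod_list (map w u)"] by simp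
      then have "ennreal (\<delta>0 powr s) * ennreal (prod_list (map w u)) \<le> diam_pow dist s E + ennreal e"
        by (rule add_increasing[OF zero_le])
      then show ?thesis using us pre by blast
    qed
  qed
  define hit where "hit i = (\<exists>\<xi>\<in>\<Omega>. address h \<xi> \<in> C i)" for i
  define ee where "ee i = \<delta>0 powr s * (1/2)^(Suc (Suc i))" for i
  have ee0: "0 < ee i" for i using \<delta>0 by (simp add: ee_def)
  have "\<forall>i. \<exists>u. hit i \<longrightarrow> set u \<subseteq> {1..M} \<and> (\<forall>\<xi>\<in>\<Omega>. address h \<xi> \<in> C i \<longrightarrow> map \<xi> [0..<length u] = u) \<and>
      ennreal (\<delta>0 powr s) * ennreal (prod_list (map w u)) \<le> diam_pow dist s (C i) + ennreal (ee i)"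
    using claim ee0 unfolding hit_def by blast
  then obtain u where u: "\<And>i. hit i \<Longrightarrow> set (u i) \<subseteq> {1..M} \<and> (\<forall>\<xi>\<in>\<Omega>. address h \<xi> \<in> C i \<longrightarrow> map \<xi> [0..<length (u i)] = u i) \<and>
      ennreal (\<delta>0 powr s) * ennreal (prod_list (map w (u i))) \<le> diam_pow dist s (C i) + ennreal (ee i)"
    by metis
  have tree: "1 \<le> (\<Sum>i. if hit i then ennreal (prod_list (map w (u i))) else 0)"
  proof (rule tree_cover[OF w0])
    show "1 \<le> sum w {1..M}" using sumge by (simp add: w_def)
    fix \<xi> :: "nat \<Rightarrow> nat" assume "\<forall>k. \<xi> k \<in> {1..M}"
    then have \<xi>: "\<xi> \<in> \<Omega>" by (simp add: \<Omega>_def code_space_def)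
    then obtain i where "address h \<xi> \<in> C i" using pA cov by blast
    then show "\<exists>i. hit i \<and> map \<xi> [0..<length (u i)] = u i"
      using u \<xi> unfolding hit_def by blast
  qed
  define D where "D = ennreal (\<delta>0 powr s)"
  have "D = D * 1" by simp
  also have "\<dots> \<le> D * (\<Sum>i. if hit i then ennreal (prod_list (map w (u i))) else 0)"
    by (rule mult_left_mono[OF tree]) simp
  also have "\<dots> = (\<Sum>i. D * (if hit i then ennreal (prod_list (map w (u i))) else 0))"
    by (rule ennreal_suminf_cmult[symmetric])
  also have "\<dots> \<le> (\<Sum>i. diam_pow dist s (C i) + ennreal (ee i))"
  proof (rule suminf_le)
    fix i show "D * (if hit i then ennreal (prod_list (map w (u i))) else 0) \<le> diam_pow dist s (C i) + ennreal (ee i)"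
      using u[of i] unfolding D_def by (cases "hit i") auto
  qed simp_all
  also have "\<dots> = (\<Sum>i. diam_pow dist s (C i)) + (\<Sum>i. ennreal (ee i))"
    by (rule suminf_add[symmetric]) simp_all
  also have "(\<Sum>i. ennreal (ee i)) = ennreal (\<delta>0 powr s / 2)"
    unfolding ee_def by (rule geom_quarter) simp
  finally have fin: "D \<le> (\<Sum>i. diam_pow dist s (C i)) + ennreal (\<delta>0 powr s / 2)" .
  have "D = ennreal (\<delta>0 powr s / 2) + ennreal (\<delta>0 powr s / 2)"
    unfolding D_def by (simp flip: ennreal_plus)
  with fin have "ennreal (\<delta>0 powr s / 2) + ennreal (\<delta>0 powr s / 2) \<le> ennreal (\<delta>0 powr s / 2) + (\<Sum>i. diam_pow dist s (C i))"
    by (simp add: add.commute)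
  then show ?thesis by (simp add: ennreal_add_left_cancel_le)
qed




lemma sep_compact:
  fixes S T :: "'a::metric_space set"
  assumes "compact S" "compact T" "S \<inter> T = {}"
  shows "\<exists>d>0. \<forall>x\<in>S. \<forall>y\<in>T. d \<le> dist x y"
proof (cases "S \<noteq> {} \<and> T \<noteq> {}")
  case True
  then have "S \<noteq> {}" "T \<noteq> {}" by auto
  have cT: "closed T" using assms(2) compact_imp_closed by blast
  let ?inf = "\<lambda>x. infdist x T"
  have "continuous_on S ?inf"
    by (auto intro!: continuous_at_imp_continuous_on continuous_infdist continuous_ident)
  then obtain x where x: "x \<in> S" "\<forall>y\<in>S. ?inf x \<le> ?inf y"
    using continuous_attains_inf[OF \<open>compact S\<close> \<open>S \<noteq> {}\<close>] by auto
  then have "0 < ?inf x"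
    using cT \<open>T \<noteq> {}\<close> in_closed_iff_infdist_zero assms(3) by (auto simp: less_le infdist_nonneg)
  moreover have "\<forall>x'\<in>S. \<forall>y\<in>T. ?inf x \<le> dist x' y"
    using x by (auto intro: order_trans infdist_le)
  ultimately show ?thesis by auto
qed (auto intro!: exI[of _ 1])

lemma finite_min_pos:
  fixes Q :: "'p \<Rightarrow> real \<Rightarrow> bool"
  assumes "finite P" "\<And>p. p \<in> P \<Longrightarrow> \<exists>d>0. Q p d" "\<And>p d d'. Q p d \<Longrightarrow> 0 < d' \<Longrightarrow> d' \<le> d \<Longrightarrow> Q p d'"
  shows "\<exists>d>0. \<forall>p\<in>P. Q p d"
proof -
  from assms(2) have "\<forall>p\<in>P. \<exists>d. 0 < d \<and> Q p d" by blast
  then obtain dd where dd: "\<And>p. p \<in> P \<Longrightarrow> 0 < dd p \<and> Q p (dd p)" by metis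
  define d where "d = Min (insert 1 (dd ` P))"
  have fin: "finite (insert 1 (dd ` P))" using assms(1) by simp
  have "d \<in> insert 1 (dd ` P)" unfolding d_def using fin by (intro Min_in) auto
  then have d0: "0 < d" using dd by auto
  have "d \<le> dd p" if "p \<in> P" for p unfolding d_def using fin that by (intro Min_le) auto
  then show ?thesis using d0 dd assms(3) by blast
qed

lemma sum_words:
  fixes h :: "nat \<Rightarrow> real"
  assumes "finite A"
  shows "(\<Sum>u\<in>{u. set u \<subseteq> A \<and> length u = k}. prod_list (map h u)) = (\<Sum>i\<in>A. h i) ^ k"
proof (induct k)
  case 0
  have "{u. set u \<subseteq> A \<and> length u = 0} = {[]}" by auto
  then show ?case by simp
next
  case (Suc k)
  let ?W = "{u. set u \<subseteq> A \<and> length u = k}"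
  have inj: "inj_on (\<lambda>(xs, n). n # xs) (?W \<times> A)" by (auto simp: inj_on_def)
  have "(\<Sum>u\<in>{u. set u \<subseteq> A \<and> length u = Suc k}. prod_list (map h u))
      = (\<Sum>p\<in>?W \<times> A. prod_list (map h ((\<lambda>(xs, n). n # xs) p)))"
    unfolding lists_length_Suc_eq by (rule sum.reindex[OF inj, unfolded comp_def])
  also have "\<dots> = (\<Sum>(xs,n)\<in>?W \<times> A. h n * prod_list (map h xs))"
    by (rule sum.cong) auto
  also have "\<dots> = (\<Sum>xs\<in>?W. \<Sum>n\<in>A. h n * prod_list (map h xs))"
    by (rule sum.cartesian_product[symmetric])
  also have "\<dots> = (\<Sum>xs\<in>?W. prod_list (map h xs) * (\<Sum>n\<in>A. h n))"
    by (simp add: sum_distrib_left sum_distrib_right mult.commute)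
  also have "\<dots> = (\<Sum>xs\<in>?W. prod_list (map h xs)) * (\<Sum>n\<in>A. h n)"
    by (simp add: sum_distrib_right)
  finally show ?case using Suc by simp
qed

lemma prod_list_pos: "(\<And>v. v \<in> set u \<Longrightarrow> 0 < g v) \<Longrightarrow> 0 < (prod_list (map g u) :: real)"
  by (induct u) auto

lemma diam_empty: "diam_wrt d {} = 0"
  by (simp add: diam_wrt_def bot_ennreal)

lemma diam_fst: "diam_wrt dist (fst ` C) \<le> diam_wrt max_dist C"
proof -
  have "diam_wrt dist (fst ` C) = (SUP x\<in>fst ` C. SUP y\<in>fst ` C. ennreal (dist x y))" by (simp add: diam_wrt_def)
  also have "\<dots> \<le> diam_wrt max_dist C"
  proof (intro SUP_least)
    fix x y assume "x \<in> fst ` C" "y \<in> fst ` C"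
    then obtain p q where pq: "p \<in> C" "q \<in> C" "x = fst p" "y = fst q" by auto
    have "ennreal (dist x y) \<le> ennreal (max_dist p q)" using pq by (intro ennreal_leI) (simp add: max_dist_def)
    also have "\<dots> \<le> diam_wrt max_dist C" by (rule diam_ge[OF pq(1,2)])
    finally show "ennreal (dist x y) \<le> diam_wrt max_dist C" .
  qed
  finally show ?thesis .
qed

locale setting =
  fixes N :: nat and f :: "nat \<Rightarrow> 'a::complete_space \<Rightarrow> 'a" and g :: "nat \<Rightarrow> 'b::complete_space \<Rightarrow> 'b"
    and c r :: "nat \<Rightarrow> real"
  assumes N: "N \<ge> 1"
    and c: "\<And>i. i \<in> {1..N} \<Longrightarrow> 0 < c i \<and> c i < 1"
    and r: "\<And>i. i \<in> {1..N} \<Longrightarrow> 0 < r i \<and> r i < 1"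
    and f_sim: "\<And>i x x'. i \<in> {1..N} \<Longrightarrow> dist (f i x) (f i x') = c i * dist x x'"
    and g_con: "\<And>i y y'. i \<in> {1..N} \<Longrightarrow> dist (g i y) (g i y') \<le> r i * dist y y'"
    and rc: "\<And>i. i \<in> {1..N} \<Longrightarrow> r i \<le> c i"
begin

lemma N1: "1 \<in> {1..N}" using N by simp

lemma cLc: "i \<in> {1..N} \<Longrightarrow> c i \<le> Max (c ` {1..N})" by (intro Max_ge) auto
lemma rLr: "i \<in> {1..N} \<Longrightarrow> r i \<le> Max (r ` {1..N})" by (intro Max_ge) auto

sublocale F: ifsL N f "Max (c ` {1..N})"
proof
  show "1 \<le> N" by (rule N)
  show "0 \<le> Max (c ` {1..N})" using cLc[OF N1] c[OF N1] by linarith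
  have "Max (c ` {1..N}) \<in> c ` {1..N}" using N1 by (intro Max_in) auto
  then show "Max (c ` {1..N}) < 1" using c by auto
  fix i x y assume i: "i \<in> {1..N}"
  show "dist (f i x) (f i y) \<le> Max (c ` {1..N}) * dist x y"
    using f_sim[OF i] cLc[OF i] by (simp add: mult_right_mono)
qed

sublocale G: ifsL N g "Max (r ` {1..N})"
proof
  show "1 \<le> N" by (rule N)
  show "0 \<le> Max (r ` {1..N})" using rLr[OF N1] r[OF N1] by linarith
  have "Max (r ` {1..N}) \<in> r ` {1..N}" using N1 by (intro Max_in) auto
  then show "Max (r ` {1..N}) < 1" using r by auto
  fix i x y assume i: "i \<in> {1..N}"
  have "dist (g i x) (g i y) \<le> r i * dist x y" by (rule g_con[OF i])
  also have "\<dots> \<le> Max (r ` {1..N}) * dist x y" using rLr[OF i] by (intro mult_right_mono) auto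
  finally show "dist (g i x) (g i y) \<le> Max (r ` {1..N}) * dist x y" .
qed

definition Lc where "Lc = Max (c ` {1..N})"

lemma graph_char: "graph_FT N f g = {(x, address g (tops N f x)) | x. x \<in> F.K}"
  by (simp add: graph_FT_def fractal_transformation_def F.attractor_eq)

lemma fst_graph: "fst ` graph_FT N f g = F.K"
  unfolding graph_char by force

lemma graph_ne: "graph_FT N f g \<noteq> {}"
  using fst_graph F.K_nonempty by auto

lemma bounds: "\<exists>D>0. (\<forall>a\<in>F.K. \<forall>a'\<in>F.K. dist a a' \<le> D) \<and> (\<forall>b\<in>G.K. \<forall>b'\<in>G.K. dist b b' \<le> D)"
proof -
  obtain D1 where D1: "\<forall>a\<in>F.K. \<forall>a'\<in>F.K. dist a a' \<le> D1"
    using compact_imp_bounded[OF F.K_compact] bounded_two_points by blast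
  obtain D2 where D2: "\<forall>a\<in>G.K. \<forall>a'\<in>G.K. dist a a' \<le> D2"
    using compact_imp_bounded[OF G.K_compact] bounded_two_points by blast
  show ?thesis
    by (intro exI[of _ "max 1 (max D1 D2)"]) (use D1 D2 in fastforce)
qed

lemma fK_inv: "i \<in> {1..N} \<Longrightarrow> f i ` F.K \<subseteq> F.K"
  using F.K_inv by blast

lemma cw_le: "set u \<subseteq> {1..N} \<Longrightarrow> prod_list (map c u) \<le> Lc ^ length u"
  unfolding Lc_def using c cLc by (intro prod_list_le_pow) (auto simp: less_imp_le)

lemma rw_le_cw: "set u \<subseteq> {1..N} \<Longrightarrow> prod_list (map r u) \<le> prod_list (map c u)"
proof (induct u)
  case (Cons v u)
  have "0 \<le> prod_list (map r u)" using Cons.prems r by (intro prod_list_nonneg') (auto simp: less_imp_le)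
  moreover have "0 \<le> c v" "r v \<le> c v" using Cons.prems c rc by (auto simp: less_imp_le)
  ultimately show ?case using Cons by (simp add: mult_mono)
qed simp

end



context setting begin

lemma UB:
  assumes s: "0 < s" and q: "(\<Sum>i\<in>{1..N}. c i powr s) < 1"
  shows "hausdorff_outer max_dist s (graph_FT N f g) = 0"
proof -
  let ?G = "graph_FT N f g"
  define Q where "Q = (\<Sum>i\<in>{1..N}. c i powr s)"
  have Q0: "0 \<le> Q" unfolding Q_def by (intro sum_nonneg) simp
  have Q1: "Q < 1" using q by (simp add: Q_def)
  obtain D where D: "0 < D" "\<And>a a'. a \<in> F.K \<Longrightarrow> a' \<in> F.K \<Longrightarrow> dist a a' \<le> D"
      "\<And>b b'. b \<in> G.K \<Longrightarrow> b' \<in> G.K \<Longrightarrow> dist b b' \<le> D"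
    using bounds by blast
  have Lc0: "0 \<le> Lc" and Lc1: "Lc < 1" using F.L0 F.L1 by (simp_all add: Lc_def)
  have hd: "hausdorff_delta max_dist s \<delta> ?G \<le> ennreal \<epsilon>" if \<delta>: "0 < \<delta>" and \<epsilon>: "0 < \<epsilon>" for \<delta> \<epsilon>
  proof -
    have t1: "(\<lambda>k. Lc ^ k * D) \<longlonglongrightarrow> 0 * D" using Lc0 Lc1 by (intro tendsto_mult tendsto_const LIMSEQ_power_zero) simp
    have t2: "(\<lambda>k. D powr s * Q ^ k) \<longlonglongrightarrow> D powr s * 0" using Q0 Q1 by (intro tendsto_mult tendsto_const LIMSEQ_power_zero) simp
    have "eventually (\<lambda>k. Lc ^ k * D < \<delta>) sequentially" using order_tendstoD(2)[OF t1] \<delta> by simp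
    moreover have "eventually (\<lambda>k. D powr s * Q ^ k < \<epsilon>) sequentially" using order_tendstoD(2)[OF t2] \<epsilon> by simp
    ultimately have "eventually (\<lambda>k. Lc ^ k * D < \<delta> \<and> D powr s * Q ^ k < \<epsilon>) sequentially"
      by (rule eventually_conj)
    then obtain k where k: "Lc ^ k * D < \<delta>" "D powr s * Q ^ k < \<epsilon>" by (auto simp: eventually_sequentially)
    define W where "W = {u. set u \<subseteq> {1..N} \<and> length u = k}"
    have finW: "finite W" unfolding W_def by (rule finite_lists_length_eq) simp
    obtain e where e: "bij_betw e {0..<card W} W" using ex_bij_betw_nat_finite[OF finW] by blast
    define E where "E u = (comp f u ` F.K) \<times> (comp g u ` G.K)" for u
    define Cv where "Cv i = (if i < card W then E (e i) else {})" for i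
    have cover: "?G \<subseteq> (\<Union>i. Cv i)"
    proof
      fix p assume "p \<in> ?G"
      then obtain x where x: "x \<in> F.K" "p = (x, address g (tops N f x))" unfolding graph_char by blast
      define \<sigma> where "\<sigma> = tops N f x"
      have \<sigma>: "\<sigma> \<in> code_space N" "address f \<sigma> = x" using F.tops_props[OF x(1)] by (simp_all add: \<sigma>_def)
      define u where "u = map \<sigma> [0..<k]"
      have uW: "u \<in> W" unfolding W_def u_def using code_space_set[OF \<sigma>(1)] by simp
      have x1: "x = comp f u (address f (\<lambda>j. \<sigma> (j+k)))" using F.address_shift[OF \<sigma>(1), of k] \<sigma>(2) by (simp add: u_def)
      have z1: "address f (\<lambda>j. \<sigma> (j+k)) \<in> F.K" using code_space_shift[OF \<sigma>(1)] by (simp add: F.K_def)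
      have x2: "address g \<sigma> = comp g u (address g (\<lambda>j. \<sigma> (j+k)))" using G.address_shift[OF \<sigma>(1), of k] by (simp add: u_def)
      have z2: "address g (\<lambda>j. \<sigma> (j+k)) \<in> G.K" using code_space_shift[OF \<sigma>(1)] by (simp add: G.K_def)
      have i1: "x \<in> comp f u ` F.K" by (rule image_eqI[where f="comp f u", OF x1 z1])
      have i2: "address g \<sigma> \<in> comp g u ` G.K" by (rule image_eqI[where f="comp g u", OF x2 z2])
      have "(x, address g \<sigma>) \<in> E u" unfolding E_def using i1 i2 by (rule mem_Sigma_iff[THEN iffD2, OF conjI])
      then have "p \<in> E u" by (simp only: x(2) \<sigma>_def)
      have "u \<in> e ` {0..<card W}" using bij_betw_imp_surj_on[OF e] uW by simp
      then obtain i where i: "i \<in> {0..<card W}" "u = e i" by (rule imageE)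
      have "Cv i = E u" using i by (simp add: Cv_def)
      with \<open>p \<in> E u\<close> show "p \<in> (\<Union>i. Cv i)" by (intro UN_I[of i]) simp_all
    qed
    have diamE: "diam_wrt max_dist (E u) \<le> ennreal (prod_list (map c u) * D)" if u: "u \<in> W" for u
    proof (rule diam_le)
      fix p q assume "p \<in> E u" "q \<in> E u"
      then obtain a b a' b' where ab: "a \<in> F.K" "b \<in> G.K" "a' \<in> F.K" "b' \<in> G.K"
        "p = (comp f u a, comp g u b)" "q = (comp f u a', comp g u b')" unfolding E_def by blast
      have us: "set u \<subseteq> {1..N}" using u by (simp add: W_def)
      have cw0: "0 \<le> prod_list (map c u)" using us c by (intro prod_list_nonneg') (auto simp: less_imp_le)
      have "dist (comp f u a) (comp f u a') = prod_list (map c u) * dist a a'"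
        using us f_sim by (intro comp_dist_eq) auto
      also have "\<dots> \<le> prod_list (map c u) * D" using cw0 D(2)[OF ab(1,3)] by (intro mult_left_mono)
      finally have 1: "dist (comp f u a) (comp f u a') \<le> prod_list (map c u) * D" .
      have "dist (comp g u b) (comp g u b') \<le> prod_list (map r u) * dist b b'"
        using us g_con r by (intro comp_dist_prod) (auto simp: less_imp_le)
      also have "\<dots> \<le> prod_list (map c u) * D"
        using rw_le_cw[OF us] D(3)[OF ab(2,4)] cw0 zero_le_dist[of b b']
          prod_list_nonneg'[of u r] r us by (intro mult_mono) (auto simp: less_imp_le)
      finally have 2: "dist (comp g u b) (comp g u b') \<le> prod_list (map c u) * D" .
      show "max_dist p q \<le> prod_list (map c u) * D" using 1 2 ab by (simp add: max_dist_def)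
    qed
    have cwk: "prod_list (map c u) * D \<le> \<delta>" if "u \<in> W" for u
    proof -
      have "prod_list (map c u) \<le> Lc ^ k" using cw_le[of u] that by (simp add: W_def)
      then have "prod_list (map c u) * D \<le> Lc ^ k * D" using D(1) by (intro mult_right_mono) auto
      then show ?thesis using k(1) by linarith
    qed
    have cw0: "0 \<le> prod_list (map c u)" if "u \<in> W" for u
      using that c by (intro prod_list_nonneg') (auto simp: W_def less_imp_le)
    have inC: "Cv \<in> {C. ?G \<subseteq> (\<Union>i. C i) \<and> (\<forall>i. diam_wrt max_dist (C i) \<le> ennreal \<delta>)}"
    proof (safe)
      show "\<And>x. x \<in> ?G \<Longrightarrow> x \<in> (\<Union>i. Cv i)" using cover by blast
      fix i
      show "diam_wrt max_dist (Cv i) \<le> ennreal \<delta>"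
      proof (cases "i < card W")
        case True
        then have ei: "e i \<in> W" using bij_betw_apply[OF e] by simp
        have "diam_wrt max_dist (Cv i) \<le> ennreal (prod_list (map c (e i)) * D)"
          using True diamE[OF ei] by (simp add: Cv_def)
        also have "\<dots> \<le> ennreal \<delta>" using cwk[OF ei] by (rule ennreal_leI)
        finally show ?thesis .
      qed (simp add: Cv_def diam_empty)
    qed
    have "hausdorff_delta max_dist s \<delta> ?G \<le> (\<Sum>i. diam_pow max_dist s (Cv i))"
      unfolding hausdorff_delta_def by (rule INF_lower[OF inC])
    also have "(\<Sum>i. diam_pow max_dist s (Cv i)) = (\<Sum>i\<in>{0..<card W}. diam_pow max_dist s (Cv i))"
      by (rule suminf_finite) (auto simp: Cv_def diam_pow_def)
    also have "\<dots> = (\<Sum>i\<in>{0..<card W}. diam_pow max_dist s (E (e i)))"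
      by (rule sum.cong) (auto simp: Cv_def)
    also have "\<dots> = (\<Sum>u\<in>W. diam_pow max_dist s (E u))"
      by (rule sum.reindex_bij_betw[OF e])
    also have "\<dots> \<le> (\<Sum>u\<in>W. ennreal ((prod_list (map c u) * D) powr s))"
      by (intro sum_mono diam_pow_le[OF s]) (use cw0 D(1) diamE in auto)
    also have "\<dots> = ennreal (\<Sum>u\<in>W. (prod_list (map c u) * D) powr s)"
      by (rule sum_ennreal) simp
    also have "(\<Sum>u\<in>W. (prod_list (map c u) * D) powr s) = (\<Sum>u\<in>W. D powr s * prod_list (map (\<lambda>i. c i powr s) u))"
    proof (rule sum.cong)
      fix u assume u: "u \<in> W"
      have "(prod_list (map c u) * D) powr s = prod_list (map c u) powr s * D powr s"
        using cw0[OF u] D(1) by (simp add: powr_mult)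
      also have "prod_list (map c u) powr s = prod_list (map (\<lambda>i. c i powr s) u)"
        using u c by (intro prod_list_powr) (auto simp: W_def less_imp_le)
      finally show "(prod_list (map c u) * D) powr s = D powr s * prod_list (map (\<lambda>i. c i powr s) u)"
        by simp
    qed simp
    also have "\<dots> = D powr s * Q ^ k"
      unfolding sum_distrib_left[symmetric] W_def Q_def by (subst sum_words) simp_all
    also have "ennreal (D powr s * Q ^ k) \<le> ennreal \<epsilon>" using k(2) by (intro ennreal_leI) simp
    finally show ?thesis .
  qed
  have "hausdorff_delta max_dist s \<delta> ?G = 0" if "0 < \<delta>" for \<delta>
  proof -
    have "hausdorff_delta max_dist s \<delta> ?G \<le> 0"
    proof (rule ennreal_le_epsilon)
      fix \<epsilon> :: real assume "0 < \<epsilon>"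
      then show "hausdorff_delta max_dist s \<delta> ?G \<le> 0 + ennreal \<epsilon>" using hd[OF that] by simp
    qed
    then show ?thesis by simp
  qed
  then have "(SUP \<delta>\<in>{0<..}. hausdorff_delta max_dist s \<delta> ?G) \<le> 0" by (intro SUP_least) simp
  then show ?thesis unfolding hausdorff_outer_def by simp
qed

end



context setting begin

lemma f_inj: "i \<in> {1..N} \<Longrightarrow> f i x = f i y \<Longrightarrow> x = y"
  using f_sim[of i x y] c[of i] by simp

lemma comp_sub: "set w \<subseteq> {1..N} \<Longrightarrow> (\<And>i. i \<in> {1..N} \<Longrightarrow> f i ` U \<subseteq> U) \<Longrightarrow> comp f w ` U \<subseteq> U"
  using F.comp_inv[of w U] by blast

lemma words_disjoint:
  assumes U: "\<And>i. i \<in> {1..N} \<Longrightarrow> f i ` U \<subseteq> U"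
    and Ud: "\<And>i j. i \<in> {1..N} \<Longrightarrow> j \<in> {1..N} \<Longrightarrow> i \<noteq> j \<Longrightarrow> f i ` U \<inter> f j ` U = {}"
  shows "set w \<subseteq> {1..N} \<Longrightarrow> set w' \<subseteq> {1..N} \<Longrightarrow> length w = length w' \<Longrightarrow> w \<noteq> w' \<Longrightarrow>
    comp f w ` U \<inter> comp f w' ` U = {}"
proof (induct w arbitrary: w')
  case Nil then show ?case by simp
next
  case (Cons v w1)
  then obtain v' w1' where w': "w' = v' # w1'" by (cases w') auto
  have v: "v \<in> {1..N}" "v' \<in> {1..N}" and s1: "set w1 \<subseteq> {1..N}" "set w1' \<subseteq> {1..N}"
    using Cons.prems w' by auto
  show ?case
  proof (cases "v = v'")
    case False
    have "comp f (v#w1) ` U \<subseteq> f v ` U" using comp_sub[OF s1(1) U] by (auto simp: image_comp[symmetric])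
    moreover have "comp f w' ` U \<subseteq> f v' ` U" using comp_sub[OF s1(2) U] w' by (auto simp: image_comp[symmetric])
    ultimately show ?thesis using Ud[OF v False] by blast
  next
    case True
    then have "w1 \<noteq> w1'" "length w1 = length w1'" using Cons.prems w' by auto
    then have d: "comp f w1 ` U \<inter> comp f w1' ` U = {}" using Cons.hyps s1 by blast
    show ?thesis
    proof (rule ccontr)
      assume "comp f (v # w1) ` U \<inter> comp f w' ` U \<noteq> {}"
      then obtain a b where ab: "a \<in> U" "b \<in> U" "f v (comp f w1 a) = f v' (comp f w1' b)" using w' by auto
      then have "comp f w1 a = comp f w1' b" using f_inj[OF v(1)] True by simp
      then show False using d ab by blast
    qed
  qed
qed

lemma LBmain:
  assumes s: "0 < s" and q: "1 < (\<Sum>i\<in>{1..N}. c i powr s)" and sosc: "SOSC N f"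
  shows "hausdorff_outer max_dist s (graph_FT N f g) \<noteq> 0"
proof -
  let ?G = "graph_FT N f g"
  obtain U where U: "open U" "\<And>i. i \<in> {1..N} \<Longrightarrow> f i ` U \<subseteq> U"
      "\<And>i j. i \<in> {1..N} \<Longrightarrow> j \<in> {1..N} \<Longrightarrow> i \<noteq> j \<Longrightarrow> f i ` U \<inter> f j ` U = {}" "U \<inter> F.K \<noteq> {}"
    using sosc unfolding SOSC_def F.attractor_eq by metis
  obtain x0 where x0: "x0 \<in> U" "x0 \<in> F.K" using U(4) by blast
  obtain e0 where e0: "0 < e0" "ball x0 e0 \<subseteq> U" using U(1) x0(1) open_contains_ball by blast
  obtain \<sigma>0 where \<sigma>0: "\<sigma>0 \<in> code_space N" "x0 = address f \<sigma>0" using x0(2) unfolding F.K_def by blast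
  obtain D where D: "0 < D" "\<And>a a'. a \<in> F.K \<Longrightarrow> a' \<in> F.K \<Longrightarrow> dist a a' \<le> D" using bounds by blast
  have Lc0: "0 \<le> Lc" and Lc1: "Lc < 1" using F.L0 F.L1 by (simp_all add: Lc_def)
  obtain m where m: "Lc^m * D < e0" using F.powL_small[of e0 D] e0 by (auto simp: Lc_def)
  define \<tau> where "\<tau> = map \<sigma>0 [0..<m]"
  have \<tau>s: "set \<tau> \<subseteq> {1..N}" using code_space_set[OF \<sigma>0(1)] by (simp add: \<tau>_def)
  have \<tau>U: "comp f \<tau> a \<in> U" if a: "a \<in> F.K" for a
  proof -
    define z0 where "z0 = address f (\<lambda>j. \<sigma>0 (j+m))"
    have x0e: "x0 = comp f \<tau> z0" using F.address_shift[OF \<sigma>0(1), of m] \<sigma>0(2) by (simp add: \<tau>_def z0_def)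
    have z0: "z0 \<in> F.K" using code_space_shift[OF \<sigma>0(1)] by (simp add: F.K_def z0_def)
    have "dist x0 (comp f \<tau> a) \<le> Lc ^ length \<tau> * dist z0 a"
      unfolding x0e Lc_def by (rule F.comp_lip[OF \<tau>s])
    also have "\<dots> \<le> Lc ^ m * D" using D(2)[OF z0 a] Lc0 by (simp add: \<tau>_def mult_left_mono)
    finally have "dist x0 (comp f \<tau> a) < e0" using m by linarith
    then show ?thesis using e0(2) by auto
  qed
  define c\<tau> where "c\<tau> = prod_list (map c \<tau>)"
  have c\<tau>0: "0 < c\<tau>" unfolding c\<tau>_def using \<tau>s c by (intro prod_list_pos) auto
  have c\<tau>1: "c\<tau> \<le> 1"
  proof -
    have "c\<tau> \<le> Lc ^ length \<tau>" unfolding c\<tau>_def by (rule cw_le[OF \<tau>s])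
    also have "\<dots> \<le> 1" using Lc0 Lc1 by (intro power_le_one) auto
    finally show ?thesis .
  qed
  define Q where "Q = (\<Sum>i\<in>{1..N}. c i powr s)"
  have Q1: "1 < Q" using q by (simp add: Q_def)
  obtain n0 where n0: "1 / c\<tau> powr s < Q ^ n0" using real_arch_pow[OF Q1] by blast
  define n where "n = Suc n0"
  have "Q ^ n0 \<le> Q ^ n" using Q1 by (simp add: n_def)
  then have "1 / c\<tau> powr s < Q ^ n" using n0 by linarith
  then have big: "1 \<le> c\<tau> powr s * Q ^ n" using c\<tau>0 by (simp add: field_simps)
  define W where "W = {u. set u \<subseteq> {1..N} \<and> length u = n}"
  have finW: "finite W" unfolding W_def by (rule finite_lists_length_eq) simp
  define M where "M = card W"
  have M1: "M \<ge> 1"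
  proof -
    have "M = N ^ n" unfolding M_def W_def using card_lists_length_eq[of "{1..N}" n] by simp
    then show ?thesis using N by simp
  qed
  obtain e where e: "bij_betw e {1..M} W" using ex_bij_betw_nat_finite_1[OF finW] unfolding M_def by blast
  have eW: "e j \<in> W" if "j \<in> {1..M}" for j using bij_betw_apply[OF e that] .
  define h where "h j = comp f (e j @ \<tau>)" for j
  define \<rho> where "\<rho> j = prod_list (map c (e j @ \<tau>))" for j
  have es: "set (e j @ \<tau>) \<subseteq> {1..N}" if "j \<in> {1..M}" for j using eW[OF that] \<tau>s by (auto simp: W_def)
  have \<rho>: "0 < \<rho> j \<and> \<rho> j < 1" if j: "j \<in> {1..M}" for j
  proof
    show "0 < \<rho> j" unfolding \<rho>_def using es[OF j] c by (intro prod_list_pos) auto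
    have "\<rho> j = prod_list (map c (e j)) * c\<tau>" by (simp add: \<rho>_def c\<tau>_def)
    also have "\<dots> \<le> prod_list (map c (e j))"
    proof -
      have "0 \<le> prod_list (map c (e j))" using c eW[OF j] by (intro prod_list_nonneg') (auto simp: W_def less_imp_le)
      then show ?thesis by (rule mult_left_le[OF c\<tau>1])
    qed
    also have "\<dots> \<le> Lc ^ n" using cw_le[of "e j"] eW[OF j] by (simp add: W_def)
    also have "\<dots> = Lc * Lc ^ n0" by (simp add: n_def)
    also have "\<dots> \<le> Lc" using Lc0 Lc1 by (simp add: mult_left_le power_le_one)
    finally show "\<rho> j < 1" using Lc1 by linarith
  qed
  have hsim: "dist (h j x) (h j y) = \<rho> j * dist x y" if j: "j \<in> {1..M}" for j x y
    unfolding h_def \<rho>_def using es[OF j] f_sim by (intro comp_dist_eq) auto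
  have Kcl: "closed F.K" using F.K_compact compact_imp_closed by blast
  have hinv: "h j ` F.K \<subseteq> F.K" if j: "j \<in> {1..M}" for j
    unfolding h_def using F.comp_inv[OF es[OF j] fK_inv] by blast
  have hK: "compact (h j ` F.K)" if j: "j \<in> {1..M}" for j
  proof (rule compact_continuous_image[OF _ F.K_compact])
    show "continuous_on F.K (h j)" using hsim[OF j] \<rho>[OF j] by (intro lip_continuous_on[of _ "\<rho> j"]) auto
  qed
  have hU: "h j ` F.K \<subseteq> comp f (e j) ` U" if j: "j \<in> {1..M}" for j
  proof
    fix y assume "y \<in> h j ` F.K"
    then obtain a where a: "a \<in> F.K" "y = h j a" by blast
    then have "y = comp f (e j) (comp f \<tau> a)" by (simp add: h_def comp_append)
    then show "y \<in> comp f (e j) ` U" using \<tau>U[OF a(1)] by blast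
  qed
  have hdisj: "h j ` F.K \<inter> h j' ` F.K = {}" if j: "j \<in> {1..M}" "j' \<in> {1..M}" "j \<noteq> j'" for j j'
  proof -
    have "e j \<noteq> e j'" using bij_betw_imp_inj_on[OF e] j unfolding inj_on_def by blast
    moreover have "set (e j) \<subseteq> {1..N}" "set (e j') \<subseteq> {1..N}" "length (e j) = length (e j')"
      using eW[OF j(1)] eW[OF j(2)] by (auto simp: W_def)
    ultimately have "comp f (e j) ` U \<inter> comp f (e j') ` U = {}"
      using words_disjoint[OF U(2) U(3)] by blast
    then show ?thesis using hU[OF j(1)] hU[OF j(2)] by blast
  qed
  obtain \<delta>0 where \<delta>0: "0 < \<delta>0" "\<forall>p\<in>{1..M} \<times> {1..M}. fst p \<noteq> snd p \<longrightarrow> (\<forall>a\<in>F.K. \<forall>a'\<in>F.K. \<delta>0 \<le> dist (h (fst p) a) (h (snd p) a'))"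
  proof -
    have "\<exists>d>0. \<forall>p\<in>{1..M} \<times> {1..M}. fst p \<noteq> snd p \<longrightarrow> (\<forall>a\<in>F.K. \<forall>a'\<in>F.K. d \<le> dist (h (fst p) a) (h (snd p) a'))"
    proof (rule finite_min_pos)
      show "finite ({1..M} \<times> {1..M})" by simp
      fix p assume p: "p \<in> {1..M} \<times> {1..M}"
      show "\<exists>d>0. fst p \<noteq> snd p \<longrightarrow> (\<forall>a\<in>F.K. \<forall>a'\<in>F.K. d \<le> dist (h (fst p) a) (h (snd p) a'))"
      proof (cases "fst p = snd p")
        case True then show ?thesis by (intro exI[of _ 1]) simp
      next
        case False
        from p have j: "fst p \<in> {1..M}" "snd p \<in> {1..M}" by auto
        obtain d where "d > 0" "\<forall>x\<in>h (fst p) ` F.K. \<forall>y\<in>h (snd p) ` F.K. d \<le> dist x y"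
          using sep_compact[OF hK[OF j(1)] hK[OF j(2)] hdisj[OF j False]] by blast
        then show ?thesis by (intro exI[of _ d]) auto
      qed
    next
      fix p d d' assume "fst p \<noteq> snd p \<longrightarrow> (\<forall>a\<in>F.K. \<forall>a'\<in>F.K. d \<le> dist (h (fst p) a) (h (snd p) a'))"
        "0 < d'" "d' \<le> d"
      then show "fst p \<noteq> snd p \<longrightarrow> (\<forall>a\<in>F.K. \<forall>a'\<in>F.K. d' \<le> dist (h (fst p) a) (h (snd p) a'))"
        by force
    qed
    then show ?thesis using that by blast
  qed
  have sep: "\<delta>0 \<le> dist (h v a) (h v' a')"
    if "v \<in> {1..M}" "v' \<in> {1..M}" "v \<noteq> v'" "a \<in> F.K" "a' \<in> F.K" for v v' a a'
    using \<delta>0(2) that by force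
  have sumge: "1 \<le> (\<Sum>v\<in>{1..M}. \<rho> v powr s)"
  proof -
    have "(\<Sum>v\<in>{1..M}. \<rho> v powr s) = (\<Sum>w\<in>W. prod_list (map c (w @ \<tau>)) powr s)"
      unfolding \<rho>_def by (rule sum.reindex_bij_betw[OF e])
    also have "\<dots> = (\<Sum>w\<in>W. prod_list (map (\<lambda>i. c i powr s) w) * c\<tau> powr s)"
    proof (rule sum.cong[OF refl])
      fix w assume w: "w \<in> W"
      have "prod_list (map c (w @ \<tau>)) powr s = prod_list (map (\<lambda>i. c i powr s) (w @ \<tau>))"
        using w \<tau>s c by (intro prod_list_powr) (auto simp: W_def less_imp_le)
      also have "\<dots> = prod_list (map (\<lambda>i. c i powr s) w) * prod_list (map (\<lambda>i. c i powr s) \<tau>)" by simp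
      also have "prod_list (map (\<lambda>i. c i powr s) \<tau>) = c\<tau> powr s"
        unfolding c\<tau>_def using \<tau>s c by (intro prod_list_powr[symmetric]) (auto simp: less_imp_le)
      finally show "prod_list (map c (w @ \<tau>)) powr s = prod_list (map (\<lambda>i. c i powr s) w) * c\<tau> powr s" .
    qed
    also have "\<dots> = Q ^ n * c\<tau> powr s"
      unfolding sum_distrib_right[symmetric] W_def Q_def by (subst sum_words) simp_all
    finally show ?thesis using big by (simp add: mult.commute)
  qed
  define \<kappa> where "\<kappa> = ennreal (\<delta>0 powr s / 2)"
  have \<kappa>0: "0 < \<kappa>" unfolding \<kappa>_def using \<delta>0(1) by simp
  have "\<kappa> \<le> hausdorff_delta max_dist s 1 ?G"
    unfolding hausdorff_delta_def
  proof (rule INF_greatest)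
    fix C :: "nat \<Rightarrow> ('a \<times> 'b) set" assume "C \<in> {C. ?G \<subseteq> (\<Union>i. C i) \<and> (\<forall>i. diam_wrt max_dist (C i) \<le> ennreal 1)}"
    then have Ccov: "?G \<subseteq> (\<Union>i. C i)" by blast
    have cov: "F.K \<subseteq> (\<Union>i. fst ` C i)"
    proof
      fix x assume "x \<in> F.K"
      then obtain p where "p \<in> ?G" "x = fst p" using fst_graph by blast
      then show "x \<in> (\<Union>i. fst ` C i)" using Ccov by blast
    qed
    have "\<kappa> \<le> (\<Sum>i. diam_pow dist s (fst ` C i))"
      unfolding \<kappa>_def
      by (rule LB[OF M1 \<rho> hsim Kcl F.K_nonempty hinv \<delta>0(1) sep s sumge cov])
    also have "\<dots> \<le> (\<Sum>i. diam_pow max_dist s (C i))"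
      by (intro suminf_le diam_pow_mono[OF s] diam_fst) auto
    finally show "\<kappa> \<le> (\<Sum>i. diam_pow max_dist s (C i))" .
  qed
  also have "\<dots> \<le> hausdorff_outer max_dist s ?G"
    unfolding hausdorff_outer_def by (rule SUP_upper) simp
  finally show ?thesis using \<kappa>0 by auto
qed

lemma H0: "hausdorff_outer max_dist 0 (graph_FT N f g) \<noteq> 0"
proof -
  let ?G = "graph_FT N f g"
  obtain p where p: "p \<in> ?G" using graph_ne by blast
  have "1 \<le> hausdorff_delta max_dist 0 1 ?G"
    unfolding hausdorff_delta_def
  proof (rule INF_greatest)
    fix C :: "nat \<Rightarrow> ('a \<times> 'b) set" assume "C \<in> {C. ?G \<subseteq> (\<Union>i. C i) \<and> (\<forall>i. diam_wrt max_dist (C i) \<le> ennreal 1)}"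
    then obtain i where i: "p \<in> C i" using p by blast
    have "(\<Sum>n\<in>{i}. diam_pow max_dist 0 (C n)) \<le> (\<Sum>n. diam_pow max_dist 0 (C n))"
      by (rule sum_le_suminf) auto
    moreover have "diam_pow max_dist 0 (C i) = 1" using i by (auto simp: diam_pow_def)
    ultimately show "1 \<le> (\<Sum>n. diam_pow max_dist 0 (C n))" by simp
  qed
  also have "\<dots> \<le> hausdorff_outer max_dist 0 ?G"
    unfolding hausdorff_outer_def by (rule SUP_upper) simp
  finally show ?thesis by auto
qed

end



theorem proposition3p9:
  fixes N :: nat
    and f :: "nat \<Rightarrow> 'a::complete_space \<Rightarrow> 'a"
    and g :: "nat \<Rightarrow> 'b::complete_space \<Rightarrow> 'b"
    and c r :: "nat \<Rightarrow> real"
    and s0 :: real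
  assumes N: "N \<ge> 1"
    and c: "\<And>i. i \<in> {1..N} \<Longrightarrow> 0 < c i \<and> c i < 1"
    and r: "\<And>i. i \<in> {1..N} \<Longrightarrow> 0 < r i \<and> r i < 1"
    and f_sim: "\<And>i x x'. i \<in> {1..N} \<Longrightarrow> dist (f i x) (f i x') = c i * dist x x'"
    and g_con: "\<And>i y y'. i \<in> {1..N} \<Longrightarrow> dist (g i y) (g i y') \<le> r i * dist y y'"
    and rc: "\<And>i. i \<in> {1..N} \<Longrightarrow> r i \<le> c i"
    and sosc: "SOSC N f"
    and s0: "(\<Sum>i=1..N. c i powr s0) = 1"
  shows "hausdorff_dim max_dist (graph_FT N f g) = ereal s0"
proof -
  interpret S: setting N f g c r
  proof
    show "1 \<le> N" by (rule N)
    show "\<And>i. i \<in> {1..N} \<Longrightarrow> 0 < c i \<and> c i < 1" by (rule c)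
    show "\<And>i. i \<in> {1..N} \<Longrightarrow> 0 < r i \<and> r i < 1" by (rule r)
    show "\<And>i x x'. i \<in> {1..N} \<Longrightarrow> dist (f i x) (f i x') = c i * dist x x'" by (rule f_sim)
    show "\<And>i y y'. i \<in> {1..N} \<Longrightarrow> dist (g i y) (g i y') \<le> r i * dist y y'" by (rule g_con)
    show "\<And>i. i \<in> {1..N} \<Longrightarrow> r i \<le> c i" by (rule rc)
  qed
  let ?G = "graph_FT N f g"
  have N1: "1 \<in> {1..N}" using N by simp
  have s00: "0 \<le> s0"
  proof (rule ccontr)
    assume "\<not> 0 \<le> s0"
    then have neg: "s0 < 0" by simp
    have "1 powr s0 < c 1 powr s0" using c[OF N1] by (intro powr_less_mono2_neg[OF neg]) auto
    then have "1 < c 1 powr s0" by simp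
    also have "c 1 powr s0 \<le> (\<Sum>i=1..N. c i powr s0)"
      using N1 by (intro member_le_sum) auto
    finally show False using s0 by simp
  qed
  have dec: "(\<Sum>i\<in>{1..N}. c i powr s) < 1" if "s0 < s" for s
  proof -
    have "(\<Sum>i\<in>{1..N}. c i powr s) < (\<Sum>i\<in>{1..N}. c i powr s0)"
      using N1 c that by (intro sum_strict_mono) (auto intro: powr_less_mono')
    then show ?thesis using s0 by simp
  qed
  have inc: "1 < (\<Sum>i\<in>{1..N}. c i powr s)" if "s < s0" for s
  proof -
    have "(\<Sum>i\<in>{1..N}. c i powr s0) < (\<Sum>i\<in>{1..N}. c i powr s)"
      using N1 c that by (intro sum_strict_mono) (auto intro: powr_less_mono')
    then show ?thesis using s0 by simp
  qed
  define Z where "Z = {ereal s |s. s \<ge> 0 \<and> hausdorff_outer max_dist s ?G = 0}"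
  have "Inf Z = ereal s0"
  proof (rule antisym)
    show "Inf Z \<le> ereal s0"
    proof (rule ereal_le_epsilon2)
      fix e :: real assume e: "0 < e"
      have "ereal (s0 + e) \<in> Z"
        unfolding Z_def using s00 e S.UB[of "s0 + e"] dec[of "s0 + e"] by auto
      then have "Inf Z \<le> ereal (s0 + e)" by (rule Inf_lower)
      then show "Inf Z \<le> ereal s0 + ereal e" by simp
    qed
    show "ereal s0 \<le> Inf Z"
    proof (rule Inf_greatest)
      fix z assume "z \<in> Z"
      then obtain s where s: "z = ereal s" "0 \<le> s" "hausdorff_outer max_dist s ?G = 0"
        unfolding Z_def by blast
      have "s0 \<le> s"
      proof (rule ccontr)
        assume "\<not> s0 \<le> s"
        then have lt: "s < s0" by simp
        show False
        proof (cases "s = 0")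
          case True then show False using S.H0 s(3) by simp
        next
          case False
          then have "0 < s" using s(2) by simp
          then show False using S.LBmain[OF _ inc[OF lt] sosc] s(3) by simp
        qed
      qed
      then show "ereal s0 \<le> z" using s(1) by simp
    qed
  qed
  then show ?thesis unfolding hausdorff_dim_def Z_def .
qed



end
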